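(* Let $E$ be a graph, $(G,\le)$ an ordered group, $w:E^1\to G_+$ a function, and $R$ a commutative ring with identity; give $L_R(E)$ the $G$-grading induced by $w$. Suppose $\pi:L_R(E)\to A$ is a homomorphism of $G$-graded $R$-algebras such that $\pi(rv)\ne0$ for all $v\in E^0$ and all nonzero $r\in R$. Then $\pi$ is injective.
   Context: A directed graph $E=(E^0,E^1,r,s)$ with range and source maps $r,s:E^1\to E^0$; a vertex $v$ is regular if $0<|s^{-1}(v)|<\infty$. The Leavitt path algebra $L_R(E)$ is the $R$-algebra generated by $\{v:v\in E^0\}\cup\{e,e^*:e\in E^1\}$ subject to: the vertices are pairwise orthogonal idempotents; $s(e)e=e=er(e)$ and $r(e)e^*=e^*=e^*s(e)$; $e^*f=\delta_{e,f}r(e)$ for $e,f\in E^1$; $v=\sum_{e\in s^{-1}(v)}ee^*$ for every regular vertex $v$. An ordered group is a group with a total order $\le$ such that $g\le h$ implies $fg\le fh$ and $gf\le hf$; $G_+=\{c: \varepsilon\le c,\ c\ne\varepsilon\}$. A map $w:E^1\to G$ induces a $G$-grading on $L_R(E)$ by $\deg v=\varepsilon$, $\deg e=w(e)$, $\deg e^*=w(e)^{-1}$. *)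

theory Defs
  imports Main
begin

text \<open>Terms are formal expressions in the generators
  v, e, e* (ghost edges), built with 0, +, *, and scalar multiplication by R.\<close>

datatype ('r,'v,'e) lterm =
    LV 'v | LE 'e | LG 'e | LZero
  | LAdd "('r,'v,'e) lterm" "('r,'v,'e) lterm"
  | LMul "('r,'v,'e) lterm" "('r,'v,'e) lterm"
  | LSmul 'r "('r,'v,'e) lterm"

inductive_set lterms :: "'v set \<Rightarrow> 'e set \<Rightarrow> ('r,'v,'e) lterm set"
  for V :: "'v set" and Ed :: "'e set" where
  gen_v: "v \<in> V \<Longrightarrow> LV v \<in> lterms V Ed"
| gen_e: "e \<in> Ed \<Longrightarrow> LE e \<in> lterms V Ed"
| gen_g: "e \<in> Ed \<Longrightarrow> LG e \<in> lterms V Ed"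
| zero: "LZero \<in> lterms V Ed"
| add: "x \<in> lterms V Ed \<Longrightarrow> y \<in> lterms V Ed \<Longrightarrow> LAdd x y \<in> lterms V Ed"
| mul: "x \<in> lterms V Ed \<Longrightarrow> y \<in> lterms V Ed \<Longrightarrow> LMul x y \<in> lterms V Ed"
| smul: "x \<in> lterms V Ed \<Longrightarrow> LSmul c x \<in> lterms V Ed"

definition regular_vertex :: "'e set \<Rightarrow> ('e \<Rightarrow> 'v) \<Rightarrow> 'v \<Rightarrow> bool" where
  "regular_vertex Ed sr v \<longleftrightarrow> finite {e \<in> Ed. sr e = v} \<and> {e \<in> Ed. sr e = v} \<noteq> {}"

definition lsum_ee :: "'e list \<Rightarrow> ('r,'v,'e) lterm" where
  "lsum_ee es = foldr (\<lambda>e t. LAdd (LMul (LE e) (LG e)) t) es LZero"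

text \<open>The smallest congruence on well-formed terms containing the axioms of an
  (associative, not necessarily unital) R-algebra and the Leavitt path algebra relations.\<close>

inductive lcong :: "'v set \<Rightarrow> 'e set \<Rightarrow> ('e \<Rightarrow> 'v) \<Rightarrow> ('e \<Rightarrow> 'v)
     \<Rightarrow> ('r::comm_ring_1,'v,'e) lterm \<Rightarrow> ('r,'v,'e) lterm \<Rightarrow> bool"
  for V :: "'v set" and Ed :: "'e set" and sr :: "'e \<Rightarrow> 'v" and rg :: "'e \<Rightarrow> 'v" where
  refl: "x \<in> lterms V Ed \<Longrightarrow> lcong V Ed sr rg x x"
| sym: "lcong V Ed sr rg x y \<Longrightarrow> lcong V Ed sr rg y x"
| trans: "lcong V Ed sr rg x y \<Longrightarrow> lcong V Ed sr rg y z \<Longrightarrow> lcong V Ed sr rg x z"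
| add_cong: "lcong V Ed sr rg x x' \<Longrightarrow> lcong V Ed sr rg y y' \<Longrightarrow>
     lcong V Ed sr rg (LAdd x y) (LAdd x' y')"
| mul_cong: "lcong V Ed sr rg x x' \<Longrightarrow> lcong V Ed sr rg y y' \<Longrightarrow>
     lcong V Ed sr rg (LMul x y) (LMul x' y')"
| smul_cong: "lcong V Ed sr rg x x' \<Longrightarrow> lcong V Ed sr rg (LSmul c x) (LSmul c x')"
| add_assoc: "x \<in> lterms V Ed \<Longrightarrow> y \<in> lterms V Ed \<Longrightarrow> z \<in> lterms V Ed \<Longrightarrow>
     lcong V Ed sr rg (LAdd (LAdd x y) z) (LAdd x (LAdd y z))"
| add_comm: "x \<in> lterms V Ed \<Longrightarrow> y \<in> lterms V Ed \<Longrightarrow>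
     lcong V Ed sr rg (LAdd x y) (LAdd y x)"
| add_zero: "x \<in> lterms V Ed \<Longrightarrow> lcong V Ed sr rg (LAdd x LZero) x"
| smul_zero: "x \<in> lterms V Ed \<Longrightarrow> lcong V Ed sr rg (LSmul 0 x) LZero"
| mul_assoc: "x \<in> lterms V Ed \<Longrightarrow> y \<in> lterms V Ed \<Longrightarrow> z \<in> lterms V Ed \<Longrightarrow>
     lcong V Ed sr rg (LMul (LMul x y) z) (LMul x (LMul y z))"
| distrib_left: "x \<in> lterms V Ed \<Longrightarrow> y \<in> lterms V Ed \<Longrightarrow> z \<in> lterms V Ed \<Longrightarrow>
     lcong V Ed sr rg (LMul x (LAdd y z)) (LAdd (LMul x y) (LMul x z))"
| distrib_right: "x \<in> lterms V Ed \<Longrightarrow> y \<in> lterms V Ed \<Longrightarrow> z \<in> lterms V Ed \<Longrightarrow>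
     lcong V Ed sr rg (LMul (LAdd x y) z) (LAdd (LMul x z) (LMul y z))"
| smul_add: "x \<in> lterms V Ed \<Longrightarrow> y \<in> lterms V Ed \<Longrightarrow>
     lcong V Ed sr rg (LSmul c (LAdd x y)) (LAdd (LSmul c x) (LSmul c y))"
| add_smul: "x \<in> lterms V Ed \<Longrightarrow>
     lcong V Ed sr rg (LSmul (c + d) x) (LAdd (LSmul c x) (LSmul d x))"
| smul_smul: "x \<in> lterms V Ed \<Longrightarrow>
     lcong V Ed sr rg (LSmul (c * d) x) (LSmul c (LSmul d x))"
| one_smul: "x \<in> lterms V Ed \<Longrightarrow> lcong V Ed sr rg (LSmul 1 x) x"
| smul_mul_left: "x \<in> lterms V Ed \<Longrightarrow> y \<in> lterms V Ed \<Longrightarrow>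
     lcong V Ed sr rg (LSmul c (LMul x y)) (LMul (LSmul c x) y)"
| smul_mul_right: "x \<in> lterms V Ed \<Longrightarrow> y \<in> lterms V Ed \<Longrightarrow>
     lcong V Ed sr rg (LSmul c (LMul x y)) (LMul x (LSmul c y))"
| vv: "v \<in> V \<Longrightarrow> u \<in> V \<Longrightarrow>
     lcong V Ed sr rg (LMul (LV v) (LV u)) (if v = u then LV v else LZero)"
| se: "e \<in> Ed \<Longrightarrow> lcong V Ed sr rg (LMul (LV (sr e)) (LE e)) (LE e)"
| er: "e \<in> Ed \<Longrightarrow> lcong V Ed sr rg (LMul (LE e) (LV (rg e))) (LE e)"
| rg_ghost: "e \<in> Ed \<Longrightarrow> lcong V Ed sr rg (LMul (LV (rg e)) (LG e)) (LG e)"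
| ghost_s: "e \<in> Ed \<Longrightarrow> lcong V Ed sr rg (LMul (LG e) (LV (sr e))) (LG e)"
| ck1: "e \<in> Ed \<Longrightarrow> f \<in> Ed \<Longrightarrow>
     lcong V Ed sr rg (LMul (LG e) (LE f)) (if e = f then LV (rg e) else LZero)"
| ck2: "v \<in> V \<Longrightarrow> regular_vertex Ed sr v \<Longrightarrow> distinct es \<Longrightarrow>
     set es = {e \<in> Ed. sr e = v} \<Longrightarrow> lcong V Ed sr rg (LV v) (lsum_ee es)"

definition lcls :: "'v set \<Rightarrow> 'e set \<Rightarrow> ('e \<Rightarrow> 'v) \<Rightarrow> ('e \<Rightarrow> 'v)
     \<Rightarrow> ('r::comm_ring_1,'v,'e) lterm \<Rightarrow> ('r,'v,'e) lterm set" where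
  "lcls V Ed sr rg t = {u. lcong V Ed sr rg t u}"

definition LPA :: "'v set \<Rightarrow> 'e set \<Rightarrow> ('e \<Rightarrow> 'v) \<Rightarrow> ('e \<Rightarrow> 'v)
     \<Rightarrow> ('r::comm_ring_1,'v,'e) lterm set set" where
  "LPA V Ed sr rg = lcls V Ed sr rg ` lterms V Ed"

inductive monom_deg :: "('e \<Rightarrow> 'g::group_add) \<Rightarrow> ('r,'v,'e) lterm \<Rightarrow> 'g \<Rightarrow> bool"
  for w :: "'e \<Rightarrow> 'g" where
  "monom_deg w (LV v) 0"
| "monom_deg w (LE e) (w e)"
| "monom_deg w (LG e) (- w e)"
| "monom_deg w x g \<Longrightarrow> monom_deg w y h \<Longrightarrow> monom_deg w (LMul x y) (g + h)"

inductive lin_deg :: "('e \<Rightarrow> 'g::group_add) \<Rightarrow> 'g \<Rightarrow> ('r,'v,'e) lterm \<Rightarrow> bool"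
  for w :: "'e \<Rightarrow> 'g" and g :: 'g where
  "monom_deg w t g \<Longrightarrow> lin_deg w g t"
| "lin_deg w g LZero"
| "lin_deg w g x \<Longrightarrow> lin_deg w g y \<Longrightarrow> lin_deg w g (LAdd x y)"
| "lin_deg w g x \<Longrightarrow> lin_deg w g (LSmul c x)"

definition LPA_comp :: "'v set \<Rightarrow> 'e set \<Rightarrow> ('e \<Rightarrow> 'v) \<Rightarrow> ('e \<Rightarrow> 'v) \<Rightarrow> ('e \<Rightarrow> 'g::group_add)
     \<Rightarrow> 'g \<Rightarrow> ('r::comm_ring_1,'v,'e) lterm set set" where
  "LPA_comp V Ed sr rg w g = lcls V Ed sr rg ` {t \<in> lterms V Ed. lin_deg w g t}"

definition r_algebra :: "('r::comm_ring_1 \<Rightarrow> 'a::ring \<Rightarrow> 'a) \<Rightarrow> bool" where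
  "r_algebra sm \<longleftrightarrow>
     (\<forall>c x y. sm c (x + y) = sm c x + sm c y) \<and>
     (\<forall>c d x. sm (c + d) x = sm c x + sm d x) \<and>
     (\<forall>c d x. sm (c * d) x = sm c (sm d x)) \<and>
     (\<forall>x. sm 1 x = x) \<and>
     (\<forall>c x y. sm c (x * y) = sm c x * y \<and> sm c (x * y) = x * sm c y)"

definition graded_algebra :: "('r::comm_ring_1 \<Rightarrow> 'a::ring \<Rightarrow> 'a) \<Rightarrow> ('g::group_add \<Rightarrow> 'a set) \<Rightarrow> bool" where
  "graded_algebra sm Ag \<longleftrightarrow> r_algebra sm \<and>
     (\<forall>g. 0 \<in> Ag g \<and> (\<forall>x\<in>Ag g. \<forall>y\<in>Ag g. x + y \<in> Ag g) \<and> (\<forall>c. \<forall>x\<in>Ag g. sm c x \<in> Ag g)) \<and>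
     (\<forall>g h. \<forall>x\<in>Ag g. \<forall>y\<in>Ag h. x * y \<in> Ag (g + h)) \<and>
     (\<forall>x. \<exists>!a. finite {g. a g \<noteq> 0} \<and> (\<forall>g. a g \<in> Ag g) \<and> x = (\<Sum>g\<in>{g. a g \<noteq> 0}. a g))"

definition ordered_group :: "('g::{group_add, linorder}) itself \<Rightarrow> bool" where
  "ordered_group _ \<longleftrightarrow> (\<forall>a b c :: 'g. a \<le> b \<longrightarrow> c + a \<le> c + b \<and> a + c \<le> b + c)"

end

theory Submission
  imports Defs "HOL-Library.Multiset"
begin


locale lpa =
  fixes V :: "'v set" and Ed :: "'e set" and sr rg :: "'e \<Rightarrow> 'v"
    and rty :: "'r::comm_ring_1 itself"
  assumes graph: "\<forall>e\<in>Ed. sr e \<in> V \<and> rg e \<in> V"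
begin

abbreviation lc :: "('r,'v,'e) lterm \<Rightarrow> ('r,'v,'e) lterm \<Rightarrow> bool" (infix "\<approx>" 50)
  where "x \<approx> y \<equiv> lcong V Ed sr rg x y"

abbreviation wf :: "('r,'v,'e) lterm \<Rightarrow> bool" where "wf x \<equiv> x \<in> lterms V Ed"

lemma lc_wf: "x \<approx> y \<Longrightarrow> wf x \<and> wf y"
proof (induction rule: lcong.induct)
  case (ck2 v es)
  have "set es \<subseteq> Ed" using ck2 by auto
  hence "wf (lsum_ee es)" unfolding lsum_ee_def
    by (induction es) (auto intro: lterms.intros)
  thus ?case using ck2 by (auto intro: lterms.intros)
qed (use graph in \<open>auto intro: lterms.intros\<close>)

lemma R: "wf x \<Longrightarrow> x \<approx> x" by (rule lcong.refl)
lemma S: "x \<approx> y \<Longrightarrow> y \<approx> x" by (rule lcong.sym)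
lemma T[trans]: "x \<approx> y \<Longrightarrow> y \<approx> z \<Longrightarrow> x \<approx> z" by (rule lcong.trans)
lemma wfL: "x \<approx> y \<Longrightarrow> wf x" using lc_wf by blast
lemma wfR: "x \<approx> y \<Longrightarrow> wf y" using lc_wf by blast

lemma AddC: "x \<approx> x' \<Longrightarrow> y \<approx> y' \<Longrightarrow> LAdd x y \<approx> LAdd x' y'" by (rule lcong.add_cong)
lemma MulC: "x \<approx> x' \<Longrightarrow> y \<approx> y' \<Longrightarrow> LMul x y \<approx> LMul x' y'" by (rule lcong.mul_cong)
lemma SmC: "x \<approx> x' \<Longrightarrow> LSmul c x \<approx> LSmul c x'" by (rule lcong.smul_cong)
lemma AddL: "x \<approx> x' \<Longrightarrow> wf y \<Longrightarrow> LAdd x y \<approx> LAdd x' y" by (simp add: AddC R)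
lemma AddR: "wf x \<Longrightarrow> y \<approx> y' \<Longrightarrow> LAdd x y \<approx> LAdd x y'" by (simp add: AddC R)
lemma MulL: "x \<approx> x' \<Longrightarrow> wf y \<Longrightarrow> LMul x y \<approx> LMul x' y" by (simp add: MulC R)
lemma MulR: "wf x \<Longrightarrow> y \<approx> y' \<Longrightarrow> LMul x y \<approx> LMul x y'" by (simp add: MulC R)

lemmas wfI = lterms.intros

lemma massoc: "wf x \<Longrightarrow> wf y \<Longrightarrow> wf z \<Longrightarrow> LMul (LMul x y) z \<approx> LMul x (LMul y z)"
  by (rule lcong.mul_assoc)

lemma smul_zero_r: "LSmul c (LZero::('r,'v,'e) lterm) \<approx> LZero"
proof -
  have "LSmul c (LZero::('r,'v,'e) lterm) \<approx> LSmul c (LSmul 0 LZero)"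
    by (rule SmC, rule S, rule lcong.smul_zero, rule wfI)
  also have "LSmul c (LSmul 0 LZero) \<approx> LSmul (c*0) (LZero::('r,'v,'e) lterm)"
    by (rule S, rule lcong.smul_smul, rule wfI)
  also have "\<dots> \<approx> LZero" by (simp, rule lcong.smul_zero, rule wfI)
  finally show ?thesis .
qed

lemma mul_zero_l: "wf x \<Longrightarrow> LMul LZero x \<approx> LZero"
proof -
  assume x: "wf x"
  have "LMul LZero x \<approx> LMul (LSmul 0 LZero) x"
    by (rule MulL[OF S[OF lcong.smul_zero[OF wfI(4)]] x])
  also have "\<dots> \<approx> LSmul 0 (LMul LZero x)" by (rule S, rule lcong.smul_mul_left, rule wfI, rule x)
  also have "\<dots> \<approx> LZero" by (rule lcong.smul_zero, simp add: wfI x)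
  finally show ?thesis .
qed

lemma mul_zero_r: "wf x \<Longrightarrow> LMul x LZero \<approx> LZero"
proof -
  assume x: "wf x"
  have "LMul x LZero \<approx> LMul x (LSmul 0 LZero)"
    by (rule MulR[OF x S[OF lcong.smul_zero[OF wfI(4)]]])
  also have "\<dots> \<approx> LSmul 0 (LMul x LZero)" by (rule S, rule lcong.smul_mul_right, rule x, rule wfI)
  also have "\<dots> \<approx> LZero" by (rule lcong.smul_zero, simp add: wfI x)
  finally show ?thesis .
qed

lemma add_zero_l: "wf x \<Longrightarrow> LAdd LZero x \<approx> x"
  by (meson T lcong.add_comm lcong.add_zero wfI(4))

lemma add_zero_r: "wf x \<Longrightarrow> LAdd x LZero \<approx> x" by (rule lcong.add_zero)

lemma zero_zero: "LAdd LZero LZero \<approx> LZero" by (rule lcong.add_zero, rule wfI)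

lemma smul_same: "wf x \<Longrightarrow> LAdd (LSmul c x) (LSmul d x) \<approx> LSmul (c+d) x"
  by (rule S, rule lcong.add_smul)

lemma add_neg: "wf x \<Longrightarrow> LAdd (LSmul (-1) x) x \<approx> LZero"
proof -
  assume x: "wf x"
  have "LAdd (LSmul (-1) x) x \<approx> LAdd (LSmul (-1) x) (LSmul 1 x)"
    by (rule AddR, simp add: wfI x, rule S, rule lcong.one_smul, rule x)
  also have "\<dots> \<approx> LSmul (-1+1) x" by (rule smul_same[OF x])
  also have "\<dots> \<approx> LZero" by (simp, rule lcong.smul_zero, rule x)
  finally show ?thesis .
qed

lemma smul_smul': "wf x \<Longrightarrow> LSmul c (LSmul d x) \<approx> LSmul (c*d) x"
  by (rule S, rule lcong.smul_smul)

lemma smul_mul_l: "wf x \<Longrightarrow> wf y \<Longrightarrow> LMul (LSmul c x) y \<approx> LSmul c (LMul x y)"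
  by (rule S, rule lcong.smul_mul_left)
lemma smul_mul_r: "wf x \<Longrightarrow> wf y \<Longrightarrow> LMul x (LSmul c y) \<approx> LSmul c (LMul x y)"
  by (rule S, rule lcong.smul_mul_right)


lemma wf_add: "wf x \<Longrightarrow> wf y \<Longrightarrow> wf (LAdd x y)" by (rule wfI)
lemma wf_mul: "wf x \<Longrightarrow> wf y \<Longrightarrow> wf (LMul x y)" by (rule wfI)
lemma wf_smul: "wf x \<Longrightarrow> wf (LSmul c x)" by (rule wfI)
lemma wf_zero: "wf LZero" by (rule wfI)

lemma add_assoc': "wf x \<Longrightarrow> wf y \<Longrightarrow> wf z \<Longrightarrow> LAdd (LAdd x y) z \<approx> LAdd x (LAdd y z)"
  by (rule lcong.add_assoc)
lemma add_comm': "wf x \<Longrightarrow> wf y \<Longrightarrow> LAdd x y \<approx> LAdd y x"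
  by (rule lcong.add_comm)

end

definition lsum :: "('r,'v,'e) lterm list \<Rightarrow> ('r,'v,'e) lterm" where
  "lsum xs = foldr LAdd xs LZero"

lemma lsum_simps[simp]: "lsum [] = LZero" "lsum (x#xs) = LAdd x (lsum xs)"
  by (simp_all add: lsum_def)

context lpa begin

lemma wf_lsum: "\<forall>x\<in>set xs. wf x \<Longrightarrow> wf (lsum xs)"
  by (induction xs) (simp_all add: wf_zero wf_add)

lemma lsum_append: "\<forall>x\<in>set xs. wf x \<Longrightarrow> \<forall>x\<in>set ys. wf x \<Longrightarrow>
   lsum (xs @ ys) \<approx> LAdd (lsum xs) (lsum ys)"
proof (induction xs)
  case Nil
  hence "wf (lsum ys)" by (intro wf_lsum) simp
  hence "lsum ys \<approx> LAdd LZero (lsum ys)" by (rule S[OF add_zero_l])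
  thus ?case by simp
next
  case (Cons x xs)
  hence h: "lsum (xs @ ys) \<approx> LAdd (lsum xs) (lsum ys)" by simp
  have "lsum ((x#xs) @ ys) \<approx> LAdd x (LAdd (lsum xs) (lsum ys))"
    using Cons h by (simp, intro AddR, simp_all)
  also have "\<dots> \<approx> LAdd (LAdd x (lsum xs)) (lsum ys)"
    using Cons by (intro S[OF add_assoc'] wf_lsum) auto
  finally show ?case by simp
qed

lemma lsum_remove1: "x \<in> set xs \<Longrightarrow> \<forall>x\<in>set xs. wf x \<Longrightarrow>
   lsum xs \<approx> LAdd x (lsum (remove1 x xs))"
proof (induction xs)
  case Nil thus ?case by simp
next
  case (Cons y ys)
  show ?case
  proof (cases "x = y")
    case True
    have "\<forall>z\<in>set (y#ys). wf z" using Cons by simp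
    hence "wf (lsum (y#ys))" by (rule wf_lsum)
    thus ?thesis using True by (simp add: R)
  next
    case False
    hence xs: "x \<in> set ys" using Cons by simp
    have w: "wf x" "wf y" using Cons xs by auto
    have "\<forall>z\<in>set (remove1 x ys). wf z" using Cons(3) set_remove1_subset[of x ys] by auto
    hence w3: "wf (lsum (remove1 x ys))" by (rule wf_lsum)
    note w = w w3
    have "lsum (y#ys) \<approx> LAdd y (LAdd x (lsum (remove1 x ys)))"
      using Cons.IH[OF xs] Cons.prems w by (simp, intro AddR, simp_all)
    also have "\<dots> \<approx> LAdd (LAdd y x) (lsum (remove1 x ys))" using w by (intro S[OF add_assoc'])
    also have "\<dots> \<approx> LAdd (LAdd x y) (lsum (remove1 x ys))" using w by (intro AddL add_comm')
    also have "\<dots> \<approx> LAdd x (LAdd y (lsum (remove1 x ys)))" using w by (intro add_assoc')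
    finally show ?thesis using False by simp
  qed
qed

lemma lsum_perm: "mset xs = mset ys \<Longrightarrow> \<forall>x\<in>set xs. wf x \<Longrightarrow> lsum xs \<approx> lsum ys"
proof (induction xs arbitrary: ys)
  case Nil
  hence "ys = []" by simp
  thus ?case by (simp add: R wfI)
next
  case (Cons x xs)
  have "x \<in># mset ys" unfolding Cons(2)[symmetric] by simp
  hence xin: "x \<in> set ys" by simp
  have m: "mset xs = mset (remove1 x ys)" unfolding mset_remove1 Cons(2)[symmetric] by simp
  have "set ys = set (x#xs)" using Cons(2) by (metis set_mset_mset)
  hence wy: "\<forall>y\<in>set ys. wf y" using Cons(3) by simp
  have "lsum (x#xs) \<approx> LAdd x (lsum (remove1 x ys))" using Cons m by (simp, intro AddR, simp_all)
  also have "\<dots> \<approx> lsum ys" using xin wy by (intro S[OF lsum_remove1])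
  finally show ?case .
qed

lemma lsum_zero: "\<forall>x\<in>set xs. x \<approx> LZero \<Longrightarrow> lsum xs \<approx> LZero"
proof (induction xs)
  case Nil thus ?case by (simp add: R wfI)
next
  case (Cons x xs)
  hence "lsum (x#xs) \<approx> LAdd LZero LZero" by (simp, intro AddC, simp_all)
  thus ?case using zero_zero T by blast
qed

lemma lsum_cong: "list_all2 (\<approx>) xs ys \<Longrightarrow> lsum xs \<approx> lsum ys"
  by (induction rule: list_all2_induct) (auto intro: AddC R wfI)

lemma lsum_map_cong: "\<forall>x\<in>set xs. f x \<approx> g x \<Longrightarrow> lsum (map f xs) \<approx> lsum (map g xs)"
  by (rule lsum_cong) (simp add: list_all2_conv_all_nth)

lemma mul_lsum_l: "wf x \<Longrightarrow> \<forall>y\<in>set ys. wf y \<Longrightarrow> LMul x (lsum ys) \<approx> lsum (map (LMul x) ys)"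
proof (induction ys)
  case Nil thus ?case by (simp add: mul_zero_r)
next
  case (Cons y ys)
  have "LMul x (lsum (y#ys)) \<approx> LAdd (LMul x y) (LMul x (lsum ys))"
    using Cons by (simp add: lcong.distrib_left wf_lsum)
  also have "\<dots> \<approx> LAdd (LMul x y) (lsum (map (LMul x) ys))"
    using Cons by (intro AddR) (auto intro: wfI)
  finally show ?case by simp
qed

lemma mul_lsum_r: "wf x \<Longrightarrow> \<forall>y\<in>set ys. wf y \<Longrightarrow> LMul (lsum ys) x \<approx> lsum (map (\<lambda>y. LMul y x) ys)"
proof (induction ys)
  case Nil thus ?case by (simp add: mul_zero_l)
next
  case (Cons y ys)
  have "LMul (lsum (y#ys)) x \<approx> LAdd (LMul y x) (LMul (lsum ys) x)"
    using Cons by (simp add: lcong.distrib_right wf_lsum)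
  also have "\<dots> \<approx> LAdd (LMul y x) (lsum (map (\<lambda>y. LMul y x) ys))"
    using Cons by (intro AddR) (auto intro: wfI)
  finally show ?case by simp
qed

lemma smul_lsum: "\<forall>y\<in>set ys. wf y \<Longrightarrow> LSmul c (lsum ys) \<approx> lsum (map (LSmul c) ys)"
proof (induction ys)
  case Nil thus ?case by (simp add: smul_zero_r)
next
  case (Cons y ys)
  have "LSmul c (lsum (y#ys)) \<approx> LAdd (LSmul c y) (LSmul c (lsum ys))"
    using Cons by (simp add: lcong.smul_add wf_lsum)
  also have "\<dots> \<approx> LAdd (LSmul c y) (lsum (map (LSmul c) ys))"
    using Cons by (intro AddR) (auto intro: wfI)
  finally show ?case by simp
qed

lemma lsum_concat: "\<forall>xs\<in>set xss. \<forall>x\<in>set xs. wf x \<Longrightarrow> lsum (concat xss) \<approx> lsum (map lsum xss)"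
proof (induction xss)
  case Nil thus ?case by (simp add: R wfI)
next
  case (Cons xs xss)
  have "lsum (concat (xs#xss)) \<approx> LAdd (lsum xs) (lsum (concat xss))"
    using Cons by (simp add: lsum_append)
  also have "\<dots> \<approx> LAdd (lsum xs) (lsum (map lsum xss))"
    using Cons by (intro AddR) (auto intro: wf_lsum)
  finally show ?case by simp
qed

end


fun pth :: "'e list \<Rightarrow> 'v \<Rightarrow> ('r,'v,'e) lterm" where
  "pth [] u = LV u" | "pth (e#es) u = LMul (LE e) (pth es u)"
fun gst :: "'e list \<Rightarrow> 'v \<Rightarrow> ('r,'v,'e) lterm" where
  "gst [] u = LV u" | "gst (e#es) u = LMul (gst es u) (LG e)"
fun start :: "('e \<Rightarrow> 'v) \<Rightarrow> 'e list \<Rightarrow> 'v \<Rightarrow> 'v" where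
  "start s [] u = u" | "start s (e#es) u = s e"
fun mono :: "'r \<times> 'v \<times> 'e list \<times> 'e list \<Rightarrow> ('r,'v,'e) lterm" where
  "mono (c,u,a,b) = LSmul c (LMul (pth a u) (gst b u))"
definition nf :: "('r \<times> 'v \<times> 'e list \<times> 'e list) list \<Rightarrow> ('r,'v,'e) lterm" where
  "nf M = lsum (map mono M)"

context lpa begin

fun ispath :: "'e list \<Rightarrow> 'v \<Rightarrow> bool" where
  "ispath [] u = True" | "ispath (e#es) u = (e \<in> Ed \<and> rg e = start sr es u \<and> ispath es u)"
fun valid :: "'r \<times> 'v \<times> 'e list \<times> 'e list \<Rightarrow> bool" where
  "valid (c,u,a,b) = (u \<in> V \<and> ispath a u \<and> ispath b u)"

lemma ispath_Ed: "ispath a u \<Longrightarrow> set a \<subseteq> Ed"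
  by (induction a) auto

lemma start_V: "u \<in> V \<Longrightarrow> ispath a u \<Longrightarrow> start sr a u \<in> V"
  by (cases a) (use graph in auto)

lemma wf_pth: "u \<in> V \<Longrightarrow> set a \<subseteq> Ed \<Longrightarrow> wf (pth a u)"
  by (induction a) (auto intro: wfI)
lemma wf_gst: "u \<in> V \<Longrightarrow> set a \<subseteq> Ed \<Longrightarrow> wf (gst a u)"
  by (induction a) (auto intro: wfI)
lemma wf_mono: "valid m \<Longrightarrow> wf (mono m)"
  by (cases m) (auto intro!: wfI wf_pth wf_gst dest: ispath_Ed)
lemma wf_nf: "\<forall>m\<in>set M. valid m \<Longrightarrow> wf (nf M)"
  unfolding nf_def by (rule wf_lsum) (auto intro: wf_mono)

lemma wf_nf_app: "\<forall>m\<in>set M. valid m \<Longrightarrow> \<forall>x\<in>set (map mono M). wf x"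
  by (auto intro: wf_mono)

lemma vvL: "v \<in> V \<Longrightarrow> u \<in> V \<Longrightarrow> LMul (LV v) (LV u) \<approx> (if v = u then LV v else LZero)"
  by (rule lcong.vv)
lemma ck1L: "e \<in> Ed \<Longrightarrow> f \<in> Ed \<Longrightarrow> LMul (LG e) (LE f) \<approx> (if e = f then LV (rg e) else LZero)"
  by (rule lcong.ck1)
lemma gsL: "e \<in> Ed \<Longrightarrow> LMul (LG e) (LV (sr e)) \<approx> LG e" by (rule lcong.ghost_s)
lemma rgL: "e \<in> Ed \<Longrightarrow> LMul (LV (rg e)) (LG e) \<approx> LG e" by (rule lcong.rg_ghost)
lemma seL: "e \<in> Ed \<Longrightarrow> LMul (LV (sr e)) (LE e) \<approx> LE e" by (rule lcong.se)
lemma erL: "e \<in> Ed \<Longrightarrow> LMul (LE e) (LV (rg e)) \<approx> LE e" by (rule lcong.er)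
lemma vv': "v \<in> V \<Longrightarrow> LMul (LV v) (LV v) \<approx> LV v"
  using vvL[of v v] by simp

lemma vL_pth: "u \<in> V \<Longrightarrow> ispath a u \<Longrightarrow> v \<in> V \<Longrightarrow>
   LMul (LV v) (pth a u) \<approx> (if v = start sr a u then pth a u else LZero)"
proof (cases a)
  case Nil
  assume "u \<in> V" "v \<in> V"
  thus ?thesis using Nil vvL[of v u] by (cases "v = u") auto
next
  case (Cons e es)
  assume u: "u \<in> V" and p: "ispath a u" and v: "v \<in> V"
  have e: "e \<in> Ed" "set es \<subseteq> Ed" using p Cons ispath_Ed by auto
  have wr: "wf (pth es u)" using u e wf_pth by auto
  have se: "sr e \<in> V" using e graph by auto
  have "LMul (LV v) (pth a u) \<approx> LMul (LMul (LV v) (LE e)) (pth es u)"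
    using Cons v e wr by (simp, intro S[OF massoc] wfI) auto
  also have "\<dots> \<approx> (if v = sr e then pth a u else LZero)"
  proof (cases "v = sr e")
    case True thus ?thesis using Cons wr e by (simp, intro MulL seL) auto
  next
    case False
    have "LMul (LV v) (LE e) \<approx> LMul (LV v) (LMul (LV (sr e)) (LE e))"
      by (intro MulR S[OF seL]) (use e v in \<open>auto intro: wfI\<close>)
    also have "\<dots> \<approx> LMul (LMul (LV v) (LV (sr e))) (LE e)"
      by (intro S[OF massoc]) (use e v se in \<open>auto intro: wfI\<close>)
    also have "\<dots> \<approx> LMul LZero (LE e)"
      using vvL[OF v se] False by (intro MulL) (use e in \<open>auto intro: wfI\<close>)
    also have "\<dots> \<approx> LZero" by (intro mul_zero_l) (use e in \<open>auto intro: wfI\<close>)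
    finally have "LMul (LMul (LV v) (LE e)) (pth es u) \<approx> LMul LZero (pth es u)"
      using wr by (intro MulL)
    also have "\<dots> \<approx> LZero" using wr by (rule mul_zero_l)
    finally show ?thesis using False by simp
  qed
  finally show ?thesis using Cons by simp
qed


lemma gst_vL: "u \<in> V \<Longrightarrow> ispath b u \<Longrightarrow> LMul (LV u) (gst b u) \<approx> gst b u"
proof (induction b)
  case Nil thus ?case by (simp add: vv')
next
  case (Cons b bs)
  have w: "wf (gst bs u)" "b \<in> Ed" using Cons by (auto intro!: wf_gst dest: ispath_Ed)
  have "LMul (LV u) (gst (b#bs) u) \<approx> LMul (LMul (LV u) (gst bs u)) (LG b)"
    using Cons w by (simp, intro S[OF massoc] wfI) auto
  also have "\<dots> \<approx> gst (b#bs) u" apply simp apply (rule MulL) using Cons w apply simp using w apply (simp add: wfI) done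
  finally show ?case .
qed

lemma gst_vR: "u \<in> V \<Longrightarrow> ispath b u \<Longrightarrow> LMul (gst b u) (LV (start sr b u)) \<approx> gst b u"
proof (cases b)
  case Nil thus "u \<in> V \<Longrightarrow> ?thesis" by (simp add: vv')
next
  case (Cons b' bs)
  assume u: "u \<in> V" and p: "ispath b u"
  have w: "wf (gst bs u)" "b' \<in> Ed" "sr b' \<in> V" using Cons u p graph by (auto intro!: wf_gst dest: ispath_Ed)
  have "LMul (gst b u) (LV (start sr b u)) \<approx> LMul (gst bs u) (LMul (LG b') (LV (sr b')))"
    using Cons w by (simp, intro massoc wfI) auto
  also have "\<dots> \<approx> gst b u" using Cons w by (simp, intro MulR gsL) auto
  finally show ?thesis .
qed

lemma gL_v: "e \<in> Ed \<Longrightarrow> u \<in> V \<Longrightarrow> LMul (LG e) (LV u) \<approx> (if sr e = u then LG e else LZero)"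
proof (cases "sr e = u")
  case True thus "e \<in> Ed \<Longrightarrow> u \<in> V \<Longrightarrow> ?thesis" using gsL[of e] by simp
next
  case False
  assume e: "e \<in> Ed" and u: "u \<in> V"
  have se: "sr e \<in> V" using e graph by auto
  have "LMul (LG e) (LV u) \<approx> LMul (LMul (LG e) (LV (sr e))) (LV u)"
    using e u by (intro MulL S[OF gsL] wfI)
  also have "\<dots> \<approx> LMul (LG e) (LMul (LV (sr e)) (LV u))" using e u se by (intro massoc wfI)
  also have "\<dots> \<approx> LMul (LG e) LZero" using e vvL[OF se u] False by (intro MulR wfI) auto
  also have "\<dots> \<approx> LZero" using e by (intro mul_zero_r wfI)
  finally show ?thesis using False by simp
qed

lemma start_snoc: "start s (bs @ [e]) r = (if bs = [] then s e else start s bs u)"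
  by (cases bs) auto

lemma ispath_snoc: "ispath b u \<Longrightarrow> e \<in> Ed \<Longrightarrow> sr e = u \<Longrightarrow> ispath (b @ [e]) (rg e)"
proof (induction b)
  case Nil thus ?case by simp
next
  case (Cons b bs)
  thus ?case using start_snoc[of sr bs e "rg e" u] by (cases "bs = []") auto
qed

lemma gL_gst: "e \<in> Ed \<Longrightarrow> u \<in> V \<Longrightarrow> ispath b u \<Longrightarrow> sr e = u \<Longrightarrow>
   LMul (LG e) (gst b u) \<approx> gst (b @ [e]) (rg e)"
proof (induction b)
  case Nil
  have "LMul (LG e) (LV u) \<approx> LG e" using Nil gsL[of e] by simp
  also have "LG e \<approx> LMul (LV (rg e)) (LG e)" using Nil by (intro S[OF rgL])
  finally show ?case by simp
next
  case (Cons b bs)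
  have w: "wf (gst bs u)" "b \<in> Ed" using Cons by (auto intro!: wf_gst dest: ispath_Ed)
  have "LMul (LG e) (gst (b#bs) u) \<approx> LMul (LMul (LG e) (gst bs u)) (LG b)"
    using Cons w by (simp, intro S[OF massoc] wfI) auto
  also have "\<dots> \<approx> LMul (gst (bs @ [e]) (rg e)) (LG b)" using Cons w by (intro MulL wfI) auto
  finally show ?case by simp
qed

lemma gL_pth: "e \<in> Ed \<Longrightarrow> u \<in> V \<Longrightarrow> ispath (e'#a) u \<Longrightarrow>
   LMul (LG e) (pth (e'#a) u) \<approx> (if e = e' then pth a u else LZero)"
proof -
  assume e: "e \<in> Ed" and u: "u \<in> V" and p: "ispath (e'#a) u"
  have w: "wf (pth a u)" "e' \<in> Ed" "ispath a u" "rg e' = start sr a u"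
    using p u by (auto intro!: wf_pth dest: ispath_Ed)
  have "LMul (LG e) (pth (e'#a) u) \<approx> LMul (LMul (LG e) (LE e')) (pth a u)"
    using e w by (simp, intro S[OF massoc] wfI) auto
  also have "\<dots> \<approx> (if e = e' then pth a u else LZero)"
  proof (cases "e = e'")
    case True
    have "LMul (LMul (LG e) (LE e')) (pth a u) \<approx> LMul (LV (rg e)) (pth a u)"
      using ck1L[OF e w(2)] True w by (intro MulL) auto
    also have "\<dots> \<approx> pth a u" using vL_pth[OF u w(3), of "rg e"] True w graph e by auto
    finally show ?thesis using True by simp
  next
    case False
    have "LMul (LMul (LG e) (LE e')) (pth a u) \<approx> LMul LZero (pth a u)"
      using ck1L[OF e w(2)] False w by (intro MulL) auto
    also have "\<dots> \<approx> LZero" using w by (intro mul_zero_l)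
    finally show ?thesis using False by simp
  qed
  finally show ?thesis .
qed

lemma eL_pth_zero: "e \<in> Ed \<Longrightarrow> u \<in> V \<Longrightarrow> ispath a u \<Longrightarrow> rg e \<noteq> start sr a u \<Longrightarrow>
   LMul (LE e) (pth a u) \<approx> LZero"
proof -
  assume e: "e \<in> Ed" and u: "u \<in> V" and p: "ispath a u" and ne: "rg e \<noteq> start sr a u"
  have w: "wf (pth a u)" "rg e \<in> V" using p u e graph by (auto intro!: wf_pth dest: ispath_Ed)
  have "LMul (LE e) (pth a u) \<approx> LMul (LMul (LE e) (LV (rg e))) (pth a u)"
    using e w by (intro MulL S[OF erL])
  also have "\<dots> \<approx> LMul (LE e) (LMul (LV (rg e)) (pth a u))" using e w by (intro massoc wfI)
  also have "\<dots> \<approx> LMul (LE e) LZero" using e vL_pth[OF u p w(2)] ne by (intro MulR wfI) auto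
  also have "\<dots> \<approx> LZero" using e by (intro mul_zero_r wfI)
  finally show ?thesis .
qed

lemma mono_left: "wf X \<Longrightarrow> valid (c,u,a,b) \<Longrightarrow>
  LMul X (mono (c,u,a,b)) \<approx> LSmul c (LMul (LMul X (pth a u)) (gst b u))"
proof -
  assume X: "wf X" and v: "valid (c,u,a,b)"
  have w: "wf (pth a u)" "wf (gst b u)" using v by (auto intro!: wf_pth wf_gst dest: ispath_Ed)
  have "LMul X (mono (c,u,a,b)) \<approx> LSmul c (LMul X (LMul (pth a u) (gst b u)))"
    using X w by (simp, intro smul_mul_r wfI)
  also have "\<dots> \<approx> LSmul c (LMul (LMul X (pth a u)) (gst b u))"
    using X w by (intro SmC S[OF massoc])
  finally show ?thesis .
qed

lemma zero_helper: "wf G \<Longrightarrow> Y \<approx> LZero \<Longrightarrow> LSmul c (LMul Y G) \<approx> LZero"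
proof -
  assume "wf G" "Y \<approx> LZero"
  hence "LSmul c (LMul Y G) \<approx> LSmul c (LMul LZero G)" by (intro SmC MulL)
  also have "\<dots> \<approx> LSmul c LZero" using \<open>wf G\<close> by (intro SmC mul_zero_l)
  also have "\<dots> \<approx> LZero" by (rule smul_zero_r)
  finally show ?thesis .
qed

lemma nf_single: "valid m \<Longrightarrow> mono m \<approx> nf [m]"
  unfolding nf_def by (simp, intro S[OF add_zero_r] wf_mono)

lemma nf_nil: "nf [] = LZero" by (simp add: nf_def)

end


fun scale :: "'r::times \<Rightarrow> 'r \<times> 'v \<times> 'e list \<times> 'e list \<Rightarrow> 'r \<times> 'v \<times> 'e list \<times> 'e list" where
  "scale d (c,u,a,b) = (d*c,u,a,b)"

context lpa begin

abbreviation vl :: "('r \<times> 'v \<times> 'e list \<times> 'e list) list \<Rightarrow> bool" where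
  "vl M \<equiv> \<forall>m\<in>set M. valid m"

fun vmulm :: "'v \<Rightarrow> 'r \<times> 'v \<times> 'e list \<times> 'e list \<Rightarrow> ('r \<times> 'v \<times> 'e list \<times> 'e list) list" where
  "vmulm v (c,u,a,b) = (if start sr a u = v then [(c,u,a,b)] else [])"
fun emulm :: "'e \<Rightarrow> 'r \<times> 'v \<times> 'e list \<times> 'e list \<Rightarrow> ('r \<times> 'v \<times> 'e list \<times> 'e list) list" where
  "emulm e (c,u,a,b) = (if rg e = start sr a u then [(c,u,e#a,b)] else [])"
fun gmulm :: "'e \<Rightarrow> 'r \<times> 'v \<times> 'e list \<times> 'e list \<Rightarrow> ('r \<times> 'v \<times> 'e list \<times> 'e list) list" where
  "gmulm e (c,u,[],b) = (if sr e = u then [(c,rg e,[],b@[e])] else [])"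
| "gmulm e (c,u,e'#a,b) = (if e' = e then [(c,u,a,b)] else [])"

lemma vmulm_valid: "valid m \<Longrightarrow> vl (vmulm v m)"
  by (cases m) auto
lemma emulm_valid: "e \<in> Ed \<Longrightarrow> valid m \<Longrightarrow> vl (emulm e m)"
  by (cases m) auto
lemma gmulm_valid: "e \<in> Ed \<Longrightarrow> valid m \<Longrightarrow> vl (gmulm e m)"
proof -
  assume e: "e \<in> Ed" and v: "valid m"
  obtain c u a b where m: "m = (c,u,a,b)" by (cases m)
  show ?thesis
  proof (cases a)
    case Nil thus ?thesis using m v e graph ispath_snoc[of b u e] by auto
  next
    case (Cons e' a') thus ?thesis using m v by auto
  qed
qed

lemma vmul_mono: "v \<in> V \<Longrightarrow> valid m \<Longrightarrow> LMul (LV v) (mono m) \<approx> nf (vmulm v m)"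
proof -
  assume v: "v \<in> V" and vm: "valid m"
  obtain c u a b where m: "m = (c,u,a,b)" by (cases m)
  have u: "u \<in> V" "ispath a u" "wf (gst b u)" using vm m by (auto intro!: wf_gst dest: ispath_Ed)
  have "LMul (LV v) (mono m) \<approx> LSmul c (LMul (LMul (LV v) (pth a u)) (gst b u))"
    using m vm v by (simp only:, intro mono_left wfI)
  also have "\<dots> \<approx> nf (vmulm v m)"
  proof (cases "start sr a u = v")
    case True
    have "LSmul c (LMul (LMul (LV v) (pth a u)) (gst b u)) \<approx> LSmul c (LMul (pth a u) (gst b u))"
      using vL_pth[OF u(1,2) v] True u by (intro SmC MulL) auto
    also have "\<dots> \<approx> nf [m]" using m vm nf_single[of m] by simp
    finally show ?thesis using True m by simp
  next
    case False
    have "LSmul c (LMul (LMul (LV v) (pth a u)) (gst b u)) \<approx> LZero"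
      using vL_pth[OF u(1,2) v] False u by (intro zero_helper) auto
    thus ?thesis using False m by (simp add: nf_nil)
  qed
  finally show ?thesis .
qed

lemma emul_mono: "e \<in> Ed \<Longrightarrow> valid m \<Longrightarrow> LMul (LE e) (mono m) \<approx> nf (emulm e m)"
proof -
  assume e: "e \<in> Ed" and vm: "valid m"
  obtain c u a b where m: "m = (c,u,a,b)" by (cases m)
  have u: "u \<in> V" "ispath a u" "wf (gst b u)" using vm m by (auto intro!: wf_gst dest: ispath_Ed)
  have "LMul (LE e) (mono m) \<approx> LSmul c (LMul (LMul (LE e) (pth a u)) (gst b u))"
    using m vm e by (simp only:, intro mono_left wfI)
  also have "\<dots> \<approx> nf (emulm e m)"
  proof (cases "rg e = start sr a u")
    case True
    have "valid (c,u,e#a,b)" using m vm e True by auto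
    hence "mono (c,u,e#a,b) \<approx> nf [(c,u,e#a,b)]" by (rule nf_single)
    thus ?thesis using True m by simp
  next
    case False
    have "LSmul c (LMul (LMul (LE e) (pth a u)) (gst b u)) \<approx> LZero"
      using eL_pth_zero[OF e u(1,2)] False u by (intro zero_helper) auto
    thus ?thesis using False m by (simp add: nf_nil)
  qed
  finally show ?thesis .
qed

lemma gmul_mono: "e \<in> Ed \<Longrightarrow> valid m \<Longrightarrow> LMul (LG e) (mono m) \<approx> nf (gmulm e m)"
proof -
  assume e: "e \<in> Ed" and vm: "valid m"
  obtain c u a b where m: "m = (c,u,a,b)" by (cases m)
  have u: "u \<in> V" "ispath a u" "ispath b u" "wf (gst b u)" "wf (pth a u)"
    using vm m by (auto intro!: wf_gst wf_pth dest: ispath_Ed)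
  have "LMul (LG e) (mono m) \<approx> LSmul c (LMul (LMul (LG e) (pth a u)) (gst b u))"
    using m vm e by (simp only:, intro mono_left wfI)
  also have "\<dots> \<approx> nf (gmulm e m)"
  proof (cases a)
    case Nil
    show ?thesis
    proof (cases "sr e = u")
      case True
      have re: "rg e \<in> V" using e graph by auto
      have p2: "ispath (b@[e]) (rg e)" using ispath_snoc[OF u(3) e True] .
      have "LSmul c (LMul (LMul (LG e) (pth a u)) (gst b u)) \<approx> LSmul c (LMul (LG e) (gst b u))"
        using gL_v[OF e u(1)] True Nil u by (intro SmC MulL) auto
      also have "\<dots> \<approx> LSmul c (gst (b@[e]) (rg e))"
        using gL_gst[OF e u(1) u(3) True] by (intro SmC)
      also have "\<dots> \<approx> LSmul c (LMul (LV (rg e)) (gst (b@[e]) (rg e)))"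
        using gst_vL[OF re p2] by (intro SmC) (rule S)
      also have "\<dots> = mono (c, rg e, [], b@[e])" by simp
      also have "\<dots> \<approx> nf [(c, rg e, [], b@[e])]" using re p2 by (intro nf_single) simp
      finally show ?thesis using True Nil m by simp
    next
      case False
      have "LSmul c (LMul (LMul (LG e) (pth a u)) (gst b u)) \<approx> LZero"
        using gL_v[OF e u(1)] False Nil u by (intro zero_helper) auto
      thus ?thesis using False Nil m by (simp add: nf_nil)
    qed
  next
    case (Cons e' a')
    show ?thesis
    proof (cases "e' = e")
      case True
      have "LSmul c (LMul (LMul (LG e) (pth a u)) (gst b u)) \<approx> LSmul c (LMul (pth a' u) (gst b u))"
        using gL_pth[OF e u(1), of e' a'] True Cons u by (intro SmC MulL) auto
      also have "\<dots> \<approx> nf [(c,u,a',b)]" using u Cons nf_single[of "(c,u,a',b)"] by auto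
      finally show ?thesis using True Cons m by simp
    next
      case False
      have "LSmul c (LMul (LMul (LG e) (pth a u)) (gst b u)) \<approx> LZero"
        using gL_pth[OF e u(1), of e' a'] False Cons u by (intro zero_helper) auto
      thus ?thesis using False Cons m by (simp add: nf_nil)
    qed
  qed
  finally show ?thesis .
qed

lemma left_nf: "wf X \<Longrightarrow> vl M \<Longrightarrow> (\<forall>m\<in>set M. LMul X (mono m) \<approx> nf (f m) \<and> vl (f m)) \<Longrightarrow>
   LMul X (nf M) \<approx> nf (concat (map f M))"
proof -
  assume X: "wf X" and vM: "vl M" and h: "\<forall>m\<in>set M. LMul X (mono m) \<approx> nf (f m) \<and> vl (f m)"
  have "LMul X (nf M) \<approx> lsum (map (LMul X) (map mono M))"
    unfolding nf_def using X vM by (intro mul_lsum_l) (auto intro: wf_mono)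
  also have "\<dots> = lsum (map (\<lambda>m. LMul X (mono m)) M)" by (simp add: comp_def)
  also have "\<dots> \<approx> lsum (map (\<lambda>m. nf (f m)) M)" using h by (intro lsum_map_cong) auto
  also have "\<dots> = lsum (map lsum (map (\<lambda>m. map mono (f m)) M))" by (simp add: nf_def comp_def)
  also have "\<dots> \<approx> lsum (concat (map (\<lambda>m. map mono (f m)) M))"
    using h by (intro S[OF lsum_concat]) (auto intro: wf_mono)
  also have "\<dots> = nf (concat (map f M))" by (simp add: nf_def map_concat comp_def)
  finally show ?thesis .
qed

lemma vl_concat: "(\<forall>m\<in>set M. vl (f m)) \<Longrightarrow> vl (concat (map f M))" by auto

lemma nf_append: "vl M \<Longrightarrow> vl N \<Longrightarrow> nf (M @ N) \<approx> LAdd (nf M) (nf N)"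
  unfolding nf_def by (simp, intro lsum_append) (auto intro: wf_mono)

lemma nf_perm: "mset M = mset N \<Longrightarrow> vl M \<Longrightarrow> nf M \<approx> nf N"
  unfolding nf_def by (intro lsum_perm) (auto intro: wf_mono)

lemma valid_scale: "valid m \<Longrightarrow> valid (scale d m)" by (cases m) auto

lemma smul_nf: "vl M \<Longrightarrow> LSmul d (nf M) \<approx> nf (map (scale d) M)"
proof -
  assume vM: "vl M"
  have "LSmul d (nf M) \<approx> lsum (map (LSmul d) (map mono M))"
    unfolding nf_def using vM by (intro smul_lsum) (auto intro: wf_mono)
  also have "\<dots> \<approx> lsum (map mono (map (scale d) M))"
  proof -
    have "\<forall>m\<in>set M. LSmul d (mono m) \<approx> mono (scale d m)"
    proof
      fix m assume "m \<in> set M"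
      hence vm: "valid m" using vM by auto
      obtain c u a b where m0: "m = (c,u,a,b)" by (cases m)
      note m = m0 vm
      hence "wf (LMul (pth a u) (gst b u))" by (auto intro!: wfI wf_pth wf_gst dest: ispath_Ed)
      thus "LSmul d (mono m) \<approx> mono (scale d m)" using m by (simp, intro smul_smul')
    qed
    hence "lsum (map (\<lambda>m. LSmul d (mono m)) M) \<approx> lsum (map (\<lambda>m. mono (scale d m)) M)"
      by (rule lsum_map_cong)
    thus ?thesis by (simp add: comp_def)
  qed
  finally show ?thesis unfolding nf_def .
qed

end


context lpa begin

fun pmul :: "'e list \<Rightarrow> 'v \<Rightarrow> ('r \<times> 'v \<times> 'e list \<times> 'e list) list \<Rightarrow> ('r \<times> 'v \<times> 'e list \<times> 'e list) list" where
  "pmul [] u N = concat (map (vmulm u) N)"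
| "pmul (e#es) u N = concat (map (emulm e) (pmul es u N))"

fun gmulL :: "'e list \<Rightarrow> 'v \<Rightarrow> ('r \<times> 'v \<times> 'e list \<times> 'e list) list \<Rightarrow> ('r \<times> 'v \<times> 'e list \<times> 'e list) list" where
  "gmulL [] u N = concat (map (vmulm u) N)"
| "gmulL (b#bs) u N = gmulL bs u (concat (map (gmulm b) N))"

lemma vmul_nf: "v \<in> V \<Longrightarrow> vl N \<Longrightarrow> LMul (LV v) (nf N) \<approx> nf (concat (map (vmulm v) N)) \<and> vl (concat (map (vmulm v) N))"
  by (intro conjI left_nf wfI) (auto intro: vmul_mono dest: vmulm_valid)
lemma emul_nf: "e \<in> Ed \<Longrightarrow> vl N \<Longrightarrow> LMul (LE e) (nf N) \<approx> nf (concat (map (emulm e) N)) \<and> vl (concat (map (emulm e) N))"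
  by (intro conjI left_nf wfI) (auto intro: emul_mono dest: emulm_valid)
lemma gmul_nf: "e \<in> Ed \<Longrightarrow> vl N \<Longrightarrow> LMul (LG e) (nf N) \<approx> nf (concat (map (gmulm e) N)) \<and> vl (concat (map (gmulm e) N))"
  by (intro conjI left_nf wfI) (auto intro: gmul_mono dest: gmulm_valid)

lemma pmul_nf: "u \<in> V \<Longrightarrow> ispath a u \<Longrightarrow> vl N \<Longrightarrow> LMul (pth a u) (nf N) \<approx> nf (pmul a u N) \<and> vl (pmul a u N)"
proof (induction a)
  case Nil thus ?case using vmul_nf by simp
next
  case (Cons e es)
  hence IH: "LMul (pth es u) (nf N) \<approx> nf (pmul es u N)" "vl (pmul es u N)" and e: "e \<in> Ed"
    and w: "wf (pth es u)" by (auto intro!: wf_pth dest: ispath_Ed)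
  have wN: "wf (nf N)" using Cons by (intro wf_nf)
  have "LMul (pth (e#es) u) (nf N) \<approx> LMul (LE e) (LMul (pth es u) (nf N))"
    using e w wN by (simp, intro massoc wfI)
  also have "\<dots> \<approx> LMul (LE e) (nf (pmul es u N))" using IH e by (intro MulR wfI)
  also have "\<dots> \<approx> nf (pmul (e#es) u N)" using emul_nf[OF e IH(2)] by simp
  finally show ?case using emul_nf[OF e IH(2)] by simp
qed

lemma gmulL_nf: "u \<in> V \<Longrightarrow> ispath b u \<Longrightarrow> vl N \<Longrightarrow> LMul (gst b u) (nf N) \<approx> nf (gmulL b u N) \<and> vl (gmulL b u N)"
proof (induction b arbitrary: N)
  case Nil thus ?case using vmul_nf by simp
next
  case (Cons e es)
  have e: "e \<in> Ed" and w: "wf (gst es u)" and p: "ispath es u" using Cons by (auto intro!: wf_gst dest: ispath_Ed)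
  have wN: "wf (nf N)" using Cons by (intro wf_nf)
  note g = gmul_nf[OF e Cons.prems(3)]
  have IH: "LMul (gst es u) (nf (concat (map (gmulm e) N))) \<approx> nf (gmulL (e#es) u N)"
    "vl (gmulL (e#es) u N)" using Cons.IH[OF Cons.prems(1) p g[THEN conjunct2]] by auto
  have "LMul (gst (e#es) u) (nf N) \<approx> LMul (gst es u) (LMul (LG e) (nf N))"
    using e w wN by (simp, intro massoc wfI)
  also have "\<dots> \<approx> LMul (gst es u) (nf (concat (map (gmulm e) N)))" using g w by (intro MulR) auto
  also have "\<dots> \<approx> nf (gmulL (e#es) u N)" by (rule IH(1))
  finally show ?case using IH(2) by simp
qed

definition prodm :: "'r \<times> 'v \<times> 'e list \<times> 'e list \<Rightarrow> ('r \<times> 'v \<times> 'e list \<times> 'e list) list \<Rightarrow> ('r \<times> 'v \<times> 'e list \<times> 'e list) list" where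
  "prodm m N = (case m of (c,u,a,b) \<Rightarrow> map (scale c) (pmul a u (gmulL b u N)))"

lemma prodm_nf: "valid m \<Longrightarrow> vl N \<Longrightarrow> LMul (mono m) (nf N) \<approx> nf (prodm m N) \<and> vl (prodm m N)"
proof -
  assume vm: "valid m" and vN: "vl N"
  obtain c u a b where m: "m = (c,u,a,b)" by (cases m)
  have u: "u \<in> V" "ispath a u" "ispath b u" "wf (gst b u)" "wf (pth a u)"
    using vm m by (auto intro!: wf_gst wf_pth dest: ispath_Ed)
  have wN: "wf (nf N)" using vN by (intro wf_nf)
  note g = gmulL_nf[OF u(1,3) vN]
  note p = pmul_nf[OF u(1,2) g[THEN conjunct2]]
  have "LMul (mono m) (nf N) \<approx> LSmul c (LMul (LMul (pth a u) (gst b u)) (nf N))"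
    using m u wN by (simp, intro smul_mul_l wfI)
  also have "\<dots> \<approx> LSmul c (LMul (pth a u) (LMul (gst b u) (nf N)))"
    using u wN by (intro SmC massoc)
  also have "\<dots> \<approx> LSmul c (LMul (pth a u) (nf (gmulL b u N)))"
    using u g by (intro SmC MulR) auto
  also have "\<dots> \<approx> LSmul c (nf (pmul a u (gmulL b u N)))"
    using p by (intro SmC) auto
  also have "\<dots> \<approx> nf (prodm m N)" unfolding prodm_def m using p by (simp, intro smul_nf) auto
  finally show ?thesis using p by (auto simp: prodm_def m intro: valid_scale)
qed

lemma mul_nf: "vl M \<Longrightarrow> vl N \<Longrightarrow> LMul (nf M) (nf N) \<approx> nf (concat (map (\<lambda>m. prodm m N) M)) \<and> vl (concat (map (\<lambda>m. prodm m N) M))"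
proof
  assume vM: "vl M" and vN: "vl N"
  have wN: "wf (nf N)" using vN by (intro wf_nf)
  have "LMul (nf M) (nf N) \<approx> lsum (map (\<lambda>y. LMul y (nf N)) (map mono M))"
    unfolding nf_def using vM wN by (intro mul_lsum_r) (auto intro: wf_mono simp: nf_def)
  also have "\<dots> = lsum (map (\<lambda>m. LMul (mono m) (nf N)) M)" by (simp add: comp_def)
  also have "\<dots> \<approx> lsum (map (\<lambda>m. nf (prodm m N)) M)" using prodm_nf vM vN by (intro lsum_map_cong) auto
  also have "\<dots> = lsum (map lsum (map (\<lambda>m. map mono (prodm m N)) M))" by (simp add: nf_def comp_def)
  also have "\<dots> \<approx> lsum (concat (map (\<lambda>m. map mono (prodm m N)) M))"
  proof (intro S[OF lsum_concat] ballI)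
    fix xs x assume a: "xs \<in> set (map (\<lambda>m. map mono (prodm m N)) M)" "x \<in> set xs"
    then obtain m m' where "m \<in> set M" "m' \<in> set (prodm m N)" "x = mono m'" by auto
    thus "wf x" using prodm_nf vM vN wf_mono by blast
  qed
  also have "\<dots> = nf (concat (map (\<lambda>m. prodm m N) M))" by (simp add: nf_def map_concat comp_def)
  finally show "LMul (nf M) (nf N) \<approx> nf (concat (map (\<lambda>m. prodm m N) M))" .
next
  assume vM: "vl M" and vN: "vl N"
  have vP: "\<forall>m\<in>set M. vl (prodm m N)" using prodm_nf vM vN by blast
  show "vl (concat (map (\<lambda>m. prodm m N) M))" by (rule vl_concat[OF vP])
qed

lemma nf_exists: "wf t \<Longrightarrow> \<exists>M. vl M \<and> t \<approx> nf M"
proof (induction rule: lterms.induct)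
  case (gen_v v)
  have "valid (1::'r,v,[],[])" using gen_v by simp
  hence "mono (1::'r,v,[],[]) \<approx> nf [(1,v,[],[])]" by (rule nf_single)
  moreover have "LV v \<approx> mono (1::'r,v,[],[])"
  proof -
    have "LMul (LV v) (LV v) \<approx> LSmul 1 (LMul (LV v) (LV v))"
      using gen_v by (intro S[OF lcong.one_smul] wfI)
    hence "LV v \<approx> LSmul 1 (LMul (LV v) (LV v))" using vv'[OF gen_v] S T by blast
    thus ?thesis by simp
  qed
  ultimately show ?case using gen_v by (intro exI[of _ "[(1,v,[],[])]"]) (auto intro: T)
next
  case (gen_e e)
  have re: "rg e \<in> V" using gen_e graph by auto
  have "valid (1::'r,rg e,[e],[])" using gen_e re by simp
  hence "mono (1::'r,rg e,[e],[]) \<approx> nf [(1,rg e,[e],[])]" by (rule nf_single)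
  moreover have "LE e \<approx> mono (1::'r,rg e,[e],[])"
  proof -
    have w: "wf (LMul (LMul (LE e) (LV (rg e))) (LV (rg e)))" using gen_e re by (intro wfI)
    have "LMul (LMul (LE e) (LV (rg e))) (LV (rg e)) \<approx> LMul (LE e) (LV (rg e))"
      using gen_e re erL[OF gen_e] by (intro MulL wfI)
    also have "\<dots> \<approx> LE e" using erL[OF gen_e] .
    finally have "LE e \<approx> LMul (LMul (LE e) (LV (rg e))) (LV (rg e))" by (rule S)
    also have "\<dots> \<approx> LSmul 1 (LMul (LMul (LE e) (LV (rg e))) (LV (rg e)))"
      using w by (intro S[OF lcong.one_smul])
    finally show ?thesis by simp
  qed
  ultimately show ?case using re gen_e by (intro exI[of _ "[(1,rg e,[e],[])]"]) (auto intro: T)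
next
  case (gen_g e)
  have re: "rg e \<in> V" using gen_g graph by auto
  have "valid (1::'r,rg e,[],[e])" using gen_g re by simp
  hence "mono (1::'r,rg e,[],[e]) \<approx> nf [(1,rg e,[],[e])]" by (rule nf_single)
  moreover have "LG e \<approx> mono (1::'r,rg e,[],[e])"
  proof -
    have w: "wf (LMul (LV (rg e)) (LMul (LV (rg e)) (LG e)))" using gen_g re by (intro wfI)
    have "LMul (LV (rg e)) (LMul (LV (rg e)) (LG e)) \<approx> LMul (LV (rg e)) (LG e)"
      using gen_g re rgL[OF gen_g] by (intro MulR wfI)
    also have "\<dots> \<approx> LG e" using rgL[OF gen_g] .
    finally have "LG e \<approx> LMul (LV (rg e)) (LMul (LV (rg e)) (LG e))" by (rule S)
    also have "\<dots> \<approx> LSmul 1 (LMul (LV (rg e)) (LMul (LV (rg e)) (LG e)))"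
      using w by (intro S[OF lcong.one_smul])
    finally show ?thesis by simp
  qed
  ultimately show ?case using re gen_g by (intro exI[of _ "[(1,rg e,[],[e])]"]) (auto intro: T)
next
  case zero
  show ?case by (intro exI[of _ "[]"]) (simp add: nf_nil R wfI)
next
  case (add x y)
  then obtain M N where h: "vl M" "x \<approx> nf M" "vl N" "y \<approx> nf N" by blast
  have "LAdd x y \<approx> LAdd (nf M) (nf N)" using h by (intro AddC)
  also have "\<dots> \<approx> nf (M @ N)" using h by (intro S[OF nf_append])
  finally show ?case using h by (intro exI[of _ "M @ N"]) auto
next
  case (mul x y)
  then obtain M N where h: "vl M" "x \<approx> nf M" "vl N" "y \<approx> nf N" by blast
  have "LMul x y \<approx> LMul (nf M) (nf N)" using h by (intro MulC)
  also have "\<dots> \<approx> nf (concat (map (\<lambda>m. prodm m N) M))" using mul_nf[OF h(1,3)] by simp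
  finally show ?case using mul_nf[OF h(1,3)] by blast
next
  case (smul x c)
  then obtain M where h: "vl M" "x \<approx> nf M" by blast
  have "LSmul c x \<approx> LSmul c (nf M)" using h by (intro SmC)
  also have "\<dots> \<approx> nf (map (scale c) M)" using h by (intro smul_nf)
  finally show ?case using h by (intro exI[of _ "map (scale c) M"]) (auto intro: valid_scale)
qed

end


definition alpha :: "'r \<times> 'v \<times> 'e list \<times> 'e list \<Rightarrow> 'e list" where "alpha m = fst (snd (snd m))"
definition beta :: "'r \<times> 'v \<times> 'e list \<times> 'e list \<Rightarrow> 'e list" where "beta m = snd (snd (snd m))"
definition vert :: "'r \<times> 'v \<times> 'e list \<times> 'e list \<Rightarrow> 'v" where "vert m = fst (snd m)"
definition coef :: "'r \<times> 'v \<times> 'e list \<times> 'e list \<Rightarrow> 'r" where "coef m = fst m"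
definition len :: "'r \<times> 'v \<times> 'e list \<times> 'e list \<Rightarrow> nat" where "len m = length (alpha m) + length (beta m)"

lemma mfield_simps[simp]: "alpha (c,u,a,b) = a" "beta (c,u,a,b) = b" "vert (c,u,a,b) = u" "coef (c,u,a,b) = c"
  "len (c,u,a,b) = length a + length b"
  by (simp_all add: alpha_def beta_def vert_def coef_def len_def)

context lpa begin

lemma split_key: "vl M \<Longrightarrow> (\<forall>k. nf (filter (\<lambda>m. f m = k) M) \<approx> LZero) \<Longrightarrow> nf M \<approx> LZero"
proof (induction "length M" arbitrary: M rule: less_induct)
  case less
  show ?case
  proof (cases M)
    case Nil thus ?thesis by (simp add: nf_nil R wfI)
  next
    case (Cons m0 M0)
    define A where "A = filter (\<lambda>m. f m = f m0) M"
    define B where "B = filter (\<lambda>m. f m \<noteq> f m0) M"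
    have vA: "vl A" "vl B" using less.prems unfolding A_def B_def by auto
    have lenB: "length B < length M" unfolding B_def Cons by (simp add: le_imp_less_Suc)
    have hB: "\<forall>k. nf (filter (\<lambda>m. f m = k) B) \<approx> LZero"
    proof
      fix k
      show "nf (filter (\<lambda>m. f m = k) B) \<approx> LZero"
      proof (cases "k = f m0")
        case True
        hence "filter (\<lambda>m. f m = k) B = []" unfolding B_def by (auto simp: filter_empty_conv)
        thus ?thesis by (simp add: nf_nil R wfI)
      next
        case False
        hence "filter (\<lambda>m. f m = k) B = filter (\<lambda>m. f m = k) M" unfolding B_def
          by (auto intro: filter_cong)
        thus ?thesis using less.prems by simp
      qed
    qed
    have "mset (A @ B) = mset M" unfolding A_def B_def
      by (simp add: multiset_partition[symmetric])
    hence "nf M \<approx> nf (A @ B)" using less.prems by (intro nf_perm) auto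
    also have "\<dots> \<approx> LAdd (nf A) (nf B)" using vA by (intro nf_append)
    also have "\<dots> \<approx> LAdd LZero LZero"
      using less.prems less.hyps[OF lenB vA(2) hB] unfolding A_def by (intro AddC) auto
    also have "\<dots> \<approx> LZero" by (rule zero_zero)
    finally show ?thesis .
  qed
qed

lemma sum_list_partition:
  fixes h :: "'r \<times> 'v \<times> 'e list \<times> 'e list \<Rightarrow> 'a::comm_monoid_add"
  shows "finite S \<Longrightarrow> d ` set M \<subseteq> S \<Longrightarrow>
    sum_list (map h M) = (\<Sum>g\<in>S. sum_list (map h (filter (\<lambda>m. d m = g) M)))"
proof (induction M)
  case Nil thus ?case by simp
next
  case (Cons m M)
  have "(\<Sum>g\<in>S. sum_list (map h (filter (\<lambda>m. d m = g) (m#M)))) =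
        (\<Sum>g\<in>S. (if d m = g then h m else 0) + sum_list (map h (filter (\<lambda>m. d m = g) M)))"
    by (intro sum.cong) auto
  also have "\<dots> = (\<Sum>g\<in>S. (if d m = g then h m else 0)) + (\<Sum>g\<in>S. sum_list (map h (filter (\<lambda>m. d m = g) M)))"
    by (rule sum.distrib)
  also have "\<dots> = h m + sum_list (map h M)" using Cons by (simp add: sum.delta)
  finally show ?case by simp
qed

end

locale lpag = lpa V Ed sr rg rty for V :: "'v set" and Ed :: "'e set" and sr rg :: "'e \<Rightarrow> 'v"
    and rty :: "'r::comm_ring_1 itself" +
  fixes w :: "'e \<Rightarrow> 'g::{group_add, linorder}"
  assumes ordG: "ordered_group TYPE('g)"
    and wpos: "\<forall>e\<in>Ed. 0 < w e"
begin

fun wp :: "'e list \<Rightarrow> 'g" where "wp [] = 0" | "wp (e#es) = w e + wp es"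
fun wg :: "'e list \<Rightarrow> 'g" where "wg [] = 0" | "wg (e#es) = wg es + - w e"

definition deg :: "'r \<times> 'v \<times> 'e list \<times> 'e list \<Rightarrow> 'g" where
  "deg m = wp (alpha m) + wg (beta m)"

lemma deg_simp[simp]: "deg (c,u,a,b) = wp a + wg b" by (simp add: deg_def)

lemma wg_eq: "wg b = - wp b"
  by (induction b) (auto simp: minus_add)

lemma addl_mono: "(a::'g) \<le> b \<Longrightarrow> c + a \<le> c + b" using ordG unfolding ordered_group_def by blast
lemma addr_mono: "(a::'g) \<le> b \<Longrightarrow> a + c \<le> b + c" using ordG unfolding ordered_group_def by blast

lemma wp_nonneg: "ispath a u \<Longrightarrow> 0 \<le> wp a"
proof (induction a)
  case Nil thus ?case by simp
next
  case (Cons e es)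
  hence "0 < w e" "0 \<le> wp es" using wpos by auto
  hence "w e + 0 \<le> w e + wp es" by (intro addl_mono)
  thus ?case using \<open>0 < w e\<close> by simp
qed

lemma wp_pos: "ispath a u \<Longrightarrow> a \<noteq> [] \<Longrightarrow> 0 < wp a"
proof (cases a)
  case (Cons e es)
  assume p: "ispath a u"
  hence "0 < w e" "0 \<le> wp es" using wpos Cons wp_nonneg[of es u] by auto
  hence "w e + 0 \<le> w e + wp es" by (intro addl_mono)
  thus ?thesis using \<open>0 < w e\<close> Cons by simp
qed simp

lemma neg_pos: "(0::'g) < x \<Longrightarrow> - x < 0"
proof -
  assume "0 < x"
  hence "- x + 0 \<le> - x + x" by (intro addl_mono) simp
  hence "- x \<le> 0" by simp
  moreover have "- x \<noteq> 0" using \<open>0 < x\<close> by (metis neg_equal_0_iff_equal order_less_irrefl)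
  ultimately show ?thesis by (simp add: order_less_le)
qed

lemma monom_pth: "monom_deg w (pth a u) (wp a)"
  by (induction a) (auto intro: monom_deg.intros)
lemma monom_gst: "monom_deg w (gst b u) (wg b)"
proof (induction b)
  case Nil thus ?case using monom_deg.intros(1) by fastforce
next
  case (Cons e es) thus ?case using monom_deg.intros(3,4) by fastforce
qed

lemma lin_mono: "deg m = g \<Longrightarrow> lin_deg w g (mono m)"
proof -
  assume d: "deg m = g"
  obtain c u a b where m: "m = (c,u,a,b)" by (cases m)
  have "monom_deg w (LMul (pth a u) (gst b u)) (wp a + wg b)"
    by (intro monom_deg.intros(4) monom_pth monom_gst)
  hence "lin_deg w g (LMul (pth a u) (gst b u))" using d m by (auto intro: lin_deg.intros(1))
  thus ?thesis using m by (auto intro: lin_deg.intros(4))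
qed

lemma lin_nf: "\<forall>m\<in>set M. deg m = g \<Longrightarrow> lin_deg w g (nf M)"
  unfolding nf_def by (induction M) (auto intro: lin_deg.intros lin_mono)

end


fun tla :: "'r \<times> 'v \<times> 'e list \<times> 'e list \<Rightarrow> 'r \<times> 'v \<times> 'e list \<times> 'e list" where
  "tla (c,u,a,b) = (c,u,tl a,b)"
fun tlb :: "'r \<times> 'v \<times> 'e list \<times> 'e list \<Rightarrow> 'r \<times> 'v \<times> 'e list \<times> 'e list" where
  "tlb (c,u,a,b) = (c,u,a,tl b)"
fun addb :: "'e \<Rightarrow> 'r \<times> 'v \<times> 'e list \<times> 'e list \<Rightarrow> 'r \<times> 'v \<times> 'e list \<times> 'e list" where
  "addb f (c,u,a,b) = (c,u,a,f#b)"
fun rmulm :: "'e \<Rightarrow> 'r \<times> 'v \<times> 'e list \<times> 'e list \<Rightarrow> ('r \<times> 'v \<times> 'e list \<times> 'e list) list" where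
  "rmulm f (c,u,a,[]) = []"
| "rmulm f (c,u,a,f'#b) = (if f' = f then [(c,u,a,b)] else [])"

context lpa begin

lemma rmulm_valid: "valid m \<Longrightarrow> vl (rmulm f m)"
proof -
  assume "valid m"
  moreover obtain c u a b where m: "m = (c,u,a,b)" by (cases m)
  ultimately show ?thesis by (cases b) auto
qed

lemma rmul_mono: "f \<in> Ed \<Longrightarrow> valid m \<Longrightarrow> beta m \<noteq> [] \<Longrightarrow> LMul (mono m) (LE f) \<approx> nf (rmulm f m)"
proof -
  assume f: "f \<in> Ed" and vm: "valid m" and bn: "beta m \<noteq> []"
  obtain c u a f' b where m: "m = (c,u,a,f'#b)" using bn by (cases m) (auto simp: neq_Nil_conv)
  have u: "u \<in> V" "ispath a u" "ispath b u" "wf (gst b u)" "wf (pth a u)" "f' \<in> Ed" "rg f' = start sr b u"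
    using vm m by (auto intro!: wf_gst wf_pth dest: ispath_Ed)
  have "LMul (mono m) (LE f) \<approx> LSmul c (LMul (LMul (pth a u) (LMul (gst b u) (LG f'))) (LE f))"
    using m u f by (simp, intro smul_mul_l wfI)
  also have "\<dots> \<approx> LSmul c (LMul (pth a u) (LMul (LMul (gst b u) (LG f')) (LE f)))"
    using u f by (intro SmC massoc wfI)
  also have "\<dots> \<approx> LSmul c (LMul (pth a u) (LMul (gst b u) (LMul (LG f') (LE f))))"
    using u f by (intro SmC MulR massoc wfI)
  also have "\<dots> \<approx> nf (rmulm f m)"
  proof (cases "f' = f")
    case True
    have "LSmul c (LMul (pth a u) (LMul (gst b u) (LMul (LG f') (LE f)))) \<approx>
          LSmul c (LMul (pth a u) (LMul (gst b u) (LV (start sr b u))))"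
      using ck1L[OF u(6) f] True u by (intro SmC MulR) auto
    also have "\<dots> \<approx> LSmul c (LMul (pth a u) (gst b u))"
      using gst_vR[OF u(1,3)] u by (intro SmC MulR)
    also have "\<dots> \<approx> nf [(c,u,a,b)]" using u nf_single[of "(c,u,a,b)"] by simp
    finally show ?thesis using True m by simp
  next
    case False
    have "LSmul c (LMul (pth a u) (LMul (gst b u) (LMul (LG f') (LE f)))) \<approx>
          LSmul c (LMul (pth a u) (LMul (gst b u) LZero))"
      using ck1L[OF u(6) f] False u by (intro SmC MulR) auto
    also have "\<dots> \<approx> LSmul c (LMul (pth a u) LZero)" using u by (intro SmC MulR mul_zero_r)
    also have "\<dots> \<approx> LSmul c LZero" using u by (intro SmC mul_zero_r)
    also have "\<dots> \<approx> LZero" by (rule smul_zero_r)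
    finally show ?thesis using False m by (simp add: nf_nil)
  qed
  finally show ?thesis .
qed

lemma right_nf: "wf X \<Longrightarrow> vl M \<Longrightarrow> (\<forall>m\<in>set M. LMul (mono m) X \<approx> nf (f m) \<and> vl (f m)) \<Longrightarrow>
   LMul (nf M) X \<approx> nf (concat (map f M))"
proof -
  assume X: "wf X" and vM: "vl M" and h: "\<forall>m\<in>set M. LMul (mono m) X \<approx> nf (f m) \<and> vl (f m)"
  have "LMul (nf M) X \<approx> lsum (map (\<lambda>y. LMul y X) (map mono M))"
    unfolding nf_def using X vM by (intro mul_lsum_r) (auto intro: wf_mono)
  also have "\<dots> = lsum (map (\<lambda>m. LMul (mono m) X) M)" by (simp add: comp_def)
  also have "\<dots> \<approx> lsum (map (\<lambda>m. nf (f m)) M)" using h by (intro lsum_map_cong) auto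
  also have "\<dots> = lsum (map lsum (map (\<lambda>m. map mono (f m)) M))" by (simp add: nf_def comp_def)
  also have "\<dots> \<approx> lsum (concat (map (\<lambda>m. map mono (f m)) M))"
  proof (intro S[OF lsum_concat] ballI)
    fix xs x assume a: "xs \<in> set (map (\<lambda>m. map mono (f m)) M)" "x \<in> set xs"
    then obtain m m' where "m \<in> set M" "m' \<in> set (f m)" "x = mono m'" by auto
    thus "wf x" using h wf_mono by blast
  qed
  also have "\<dots> = nf (concat (map f M))" by (simp add: nf_def map_concat comp_def)
  finally show ?thesis .
qed

lemma rmul_nf: "f \<in> Ed \<Longrightarrow> vl M \<Longrightarrow> \<forall>m\<in>set M. beta m \<noteq> [] \<Longrightarrow>
  LMul (nf M) (LE f) \<approx> nf (concat (map (rmulm f) M)) \<and> vl (concat (map (rmulm f) M))"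
proof -
  assume f: "f \<in> Ed" and vM: "vl M" and b: "\<forall>m\<in>set M. beta m \<noteq> []"
  have h: "\<forall>m\<in>set M. LMul (mono m) (LE f) \<approx> nf (rmulm f m) \<and> vl (rmulm f m)"
    using f vM b rmul_mono rmulm_valid by blast
  have "LMul (nf M) (LE f) \<approx> nf (concat (map (rmulm f) M))"
    by (rule right_nf[OF wfI(2)[OF f] vM h])
  moreover have "vl (concat (map (rmulm f) M))" using h by (intro vl_concat) blast
  ultimately show ?thesis by blast
qed

lemma addb_mono: "valid (c,u,a,b) \<Longrightarrow> f \<in> Ed \<Longrightarrow> LMul (mono (c,u,a,b)) (LG f) \<approx> mono (c,u,a,f#b)"
proof -
  assume vm: "valid (c,u,a,b)" and f: "f \<in> Ed"
  have u: "wf (gst b u)" "wf (pth a u)" using vm by (auto intro!: wf_gst wf_pth dest: ispath_Ed)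
  have "LMul (mono (c,u,a,b)) (LG f) \<approx> LSmul c (LMul (LMul (pth a u) (gst b u)) (LG f))"
    using u f by (simp, intro smul_mul_l wfI)
  also have "\<dots> \<approx> LSmul c (LMul (pth a u) (LMul (gst b u) (LG f)))" using u f by (intro SmC massoc wfI)
  finally show ?thesis by simp
qed

lemma addb_nf: "f \<in> Ed \<Longrightarrow> vl N \<Longrightarrow> vl (map (addb f) N) \<Longrightarrow> LMul (nf N) (LG f) \<approx> nf (map (addb f) N)"
proof -
  assume f: "f \<in> Ed" and vN: "vl N" and vA: "vl (map (addb f) N)"
  have "LMul (nf N) (LG f) \<approx> nf (concat (map (\<lambda>m. [addb f m]) N))"
  proof (intro right_nf wfI f vN ballI conjI)
    fix m assume mN: "m \<in> set N"
    obtain c u a b where m: "m = (c,u,a,b)" by (cases m)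
    have "valid (c,u,a,f#b)" using vA mN m by force
    hence "mono (c,u,a,f#b) \<approx> nf [(c,u,a,f#b)]" by (rule nf_single)
    moreover have "LMul (mono m) (LG f) \<approx> mono (c,u,a,f#b)" using addb_mono vN mN m f by blast
    ultimately show "LMul (mono m) (LG f) \<approx> nf [addb f m]" using m T by simp
    show "\<And>x. x \<in> set [addb f m] \<Longrightarrow> valid x" using vA mN by auto
  qed
  moreover have "concat (map (\<lambda>m. [addb f m]) N) = map (addb f) N" by (induction N) auto
  ultimately show ?thesis by simp
qed

lemma gmul_list: "\<forall>m\<in>set M. alpha m \<noteq> [] \<Longrightarrow>
   concat (map (gmulm e) M) = map tla (filter (\<lambda>m. hd (alpha m) = e) M)"
proof (induction M)
  case (Cons m M)
  obtain c u a b where m: "m = (c,u,a,b)" by (cases m)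
  thus ?case using Cons by (cases a) auto
qed simp

lemma emul_list: "vl M \<Longrightarrow> \<forall>m\<in>set M. alpha m \<noteq> [] \<Longrightarrow>
   concat (map (emulm e) (map tla (filter (\<lambda>m. hd (alpha m) = e) M))) = filter (\<lambda>m. hd (alpha m) = e) M"
proof (induction M)
  case (Cons m M)
  obtain c u a b where m: "m = (c,u,a,b)" by (cases m)
  thus ?case using Cons by (cases a) auto
qed simp

lemma rmul_list: "\<forall>m\<in>set M. beta m \<noteq> [] \<Longrightarrow>
   concat (map (rmulm f) M) = map tlb (filter (\<lambda>m. hd (beta m) = f) M)"
proof (induction M)
  case (Cons m M)
  obtain c u a b where m: "m = (c,u,a,b)" by (cases m)
  thus ?case using Cons by (cases b) auto
qed simp

lemma addb_list: "\<forall>m\<in>set M. beta m \<noteq> [] \<Longrightarrow>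
   map (addb f) (map tlb (filter (\<lambda>m. hd (beta m) = f) M)) = filter (\<lambda>m. hd (beta m) = f) M"
proof (induction M)
  case (Cons m M)
  obtain c u a b where m: "m = (c,u,a,b)" by (cases m)
  thus ?case using Cons by (cases b) auto
qed simp

lemma vmul_list: "concat (map (vmulm u) M) = filter (\<lambda>m. start sr (alpha m) (vert m) = u) M"
proof (induction M)
  case (Cons m M)
  obtain c u a b where m: "m = (c,u,a,b)" by (cases m)
  thus ?case using Cons by auto
qed simp

lemma gmul_list_inf: "\<forall>m\<in>set M. start sr (alpha m) (vert m) = u \<Longrightarrow> sr e = u \<Longrightarrow>
  \<forall>m\<in>set M. alpha m = [] \<longrightarrow> beta m = [] \<Longrightarrow>
  \<forall>m\<in>set M. alpha m \<noteq> [] \<longrightarrow> hd (alpha m) \<noteq> e \<Longrightarrow>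
  concat (map (gmulm e) M) = map (\<lambda>m. (coef m, rg e, [], [e])) (filter (\<lambda>m. alpha m = []) M)"
proof (induction M)
  case (Cons m M)
  obtain c u a b where m: "m = (c,u,a,b)" by (cases m)
  thus ?case using Cons by (cases a) auto
qed simp

lemma rmul_list_inf: "concat (map (rmulm e) (map (\<lambda>m. (coef m, rg e, [], [e])) L)) =
   map (\<lambda>m. (coef m, rg e, [], [])) L"
  by (induction L) auto

lemma nf_vertex: "u \<in> V \<Longrightarrow> \<forall>m\<in>set M. m = (coef m, u, [], []) \<Longrightarrow>
   nf M \<approx> LSmul (sum_list (map coef M)) (LV u)"
proof (induction M)
  case Nil
  have "LSmul 0 (LV u) \<approx> LZero" using Nil by (intro lcong.smul_zero wfI)
  thus ?case by (simp add: nf_nil S)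
next
  case (Cons m M)
  have IH: "lsum (map mono M) \<approx> LSmul (sum_list (map coef M)) (LV u)" using Cons unfolding nf_def by simp
  have "mono m = LSmul (coef m) (LMul (LV u) (LV u))" using Cons.prems
    by (metis list.set_intros(1) mono.simps pth.simps(1) gst.simps(1))
  also have "\<dots> \<approx> LSmul (coef m) (LV u)" using Cons.prems by (intro SmC vv')
  finally have h: "mono m \<approx> LSmul (coef m) (LV u)" .
  have "nf (m#M) \<approx> LAdd (LSmul (coef m) (LV u)) (LSmul (sum_list (map coef M)) (LV u))"
    unfolding nf_def using h IH by (simp, intro AddC)
  also have "\<dots> \<approx> LSmul (coef m + sum_list (map coef M)) (LV u)" using Cons.prems by (intro smul_same wfI)
  finally show ?case by simp
qed

end


locale lpapi = lpag V Ed sr rg rty w for V :: "'v set" and Ed :: "'e set" and sr rg :: "'e \<Rightarrow> 'v"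
    and rty :: "'r::comm_ring_1 itself" and w :: "'e \<Rightarrow> 'g::{group_add, linorder}" +
  fixes sm :: "'r \<Rightarrow> 'a::ring \<Rightarrow> 'a" and Ag :: "'g \<Rightarrow> 'a set"
    and \<pi> :: "('r,'v,'e) lterm set \<Rightarrow> 'a"
  assumes Agr: "graded_algebra sm Ag"
    and hom_add: "\<forall>x\<in>lterms V Ed. \<forall>y\<in>lterms V Ed.
        \<pi> (lcls V Ed sr rg (LAdd x y)) = \<pi> (lcls V Ed sr rg x) + \<pi> (lcls V Ed sr rg y)"
    and hom_mul: "\<forall>x\<in>lterms V Ed. \<forall>y\<in>lterms V Ed.
        \<pi> (lcls V Ed sr rg (LMul x y)) = \<pi> (lcls V Ed sr rg x) * \<pi> (lcls V Ed sr rg y)"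
    and hom_smul: "\<forall>c. \<forall>x\<in>lterms V Ed.
        \<pi> (lcls V Ed sr rg (LSmul c x)) = sm c (\<pi> (lcls V Ed sr rg x))"
    and hom_graded: "\<forall>g. \<forall>X\<in>LPA_comp V Ed sr rg w g. \<pi> X \<in> Ag g"
    and nonzero: "\<forall>v\<in>V. \<forall>c::'r. c \<noteq> 0 \<longrightarrow> \<pi> (lcls V Ed sr rg (LSmul c (LV v))) \<noteq> 0"
begin

abbreviation P :: "('r,'v,'e) lterm \<Rightarrow> 'a" where "P x \<equiv> \<pi> (lcls V Ed sr rg x)"

lemma lcls_eq: "x \<approx> y \<Longrightarrow> lcls V Ed sr rg x = lcls V Ed sr rg y"
  unfolding lcls_def by (auto intro: T S)

lemma P_cong: "x \<approx> y \<Longrightarrow> P x = P y" using lcls_eq by simp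

lemma P_add: "wf x \<Longrightarrow> wf y \<Longrightarrow> P (LAdd x y) = P x + P y" using hom_add by blast
lemma P_mul: "wf x \<Longrightarrow> wf y \<Longrightarrow> P (LMul x y) = P x * P y" using hom_mul by blast
lemma P_smul: "wf x \<Longrightarrow> P (LSmul c x) = sm c (P x)" using hom_smul by blast

lemma P_zero: "P LZero = 0"
proof -
  have "P LZero = P (LAdd LZero LZero)" using P_cong[OF zero_zero] by simp
  also have "\<dots> = P LZero + P LZero" by (intro P_add wfI)
  finally show ?thesis by simp
qed

lemma P_zero': "x \<approx> LZero \<Longrightarrow> P x = 0" using P_cong P_zero by simp

lemma P_nf: "vl M \<Longrightarrow> P (nf M) = sum_list (map (\<lambda>m. P (mono m)) M)"
proof (induction M)
  case Nil thus ?case by (simp add: nf_nil P_zero)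
next
  case (Cons m M)
  have "P (nf (m#M)) = P (mono m) + P (nf M)" unfolding nf_def using Cons.prems
    by (simp, intro P_add wf_mono wf_lsum) (auto intro: wf_mono)
  thus ?case using Cons by simp
qed

lemma sm_neg: "sm (-1) x = - x"
proof -
  have ra: "r_algebra sm" using Agr unfolding graded_algebra_def by blast
  have add: "\<And>c d x. sm (c + d) x = sm c x + sm d x" and one: "\<And>x. sm 1 x = x"
    using ra unfolding r_algebra_def by blast+
  have "sm 0 x = sm 0 x + sm 0 x" using add[of 0 0 x] by simp
  hence z: "sm 0 x = 0" by simp
  have "sm (-1 + 1) x = sm (-1) x + sm 1 x" by (rule add)
  hence "sm (-1 + 1) x = sm (-1) x + x" using one by simp
  thus ?thesis using z by (simp add: eq_neg_iff_add_eq_0)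
qed

lemma homog_parts: "vl M \<Longrightarrow> P (nf M) = 0 \<Longrightarrow> P (nf (filter (\<lambda>m. deg m = g) M)) = 0"
proof -
  assume vM: "vl M" and P0: "P (nf M) = 0"
  define a where "a g = P (nf (filter (\<lambda>m. deg m = g) M))" for g
  define S where "S = deg ` set M"
  have fS: "finite S" unfolding S_def by simp
  have vMg: "\<And>g. vl (filter (\<lambda>m. deg m = g) M)" using vM by auto
  have aAg: "\<forall>g. a g \<in> Ag g"
  proof
    fix g
    have "lcls V Ed sr rg (nf (filter (\<lambda>m. deg m = g) M)) \<in> LPA_comp V Ed sr rg w g"
      unfolding LPA_comp_def using wf_nf[OF vMg] lin_nf[of "filter (\<lambda>m. deg m = g) M" g] by auto
    thus "a g \<in> Ag g" unfolding a_def using hom_graded by blast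
  qed
  have sub: "{g. a g \<noteq> 0} \<subseteq> S"
  proof
    fix g assume "g \<in> {g. a g \<noteq> 0}"
    hence "filter (\<lambda>m. deg m = g) M \<noteq> []" unfolding a_def by (auto simp: nf_nil P_zero)
    thus "g \<in> S" unfolding S_def by (auto simp: filter_empty_conv)
  qed
  hence fin: "finite {g. a g \<noteq> 0}" using fS finite_subset by blast
  have "(\<Sum>g\<in>{g. a g \<noteq> 0}. a g) = (\<Sum>g\<in>S. a g)"
    using sub fS by (intro sum.mono_neutral_left) auto
  also have "\<dots> = (\<Sum>g\<in>S. sum_list (map (\<lambda>m. P (mono m)) (filter (\<lambda>m. deg m = g) M)))"
    unfolding a_def using vMg by (intro sum.cong) (auto simp: P_nf)
  also have "\<dots> = sum_list (map (\<lambda>m. P (mono m)) M)"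
    using fS by (intro sum_list_partition[symmetric]) (auto simp: S_def)
  also have "\<dots> = 0" using P0 P_nf[OF vM] by simp
  finally have sum0: "(\<Sum>g\<in>{g. a g \<noteq> 0}. a g) = 0" .
  note ga = Agr[unfolded graded_algebra_def]
  have "\<forall>x. \<exists>!a. finite {g. a g \<noteq> 0} \<and> (\<forall>g. a g \<in> Ag g) \<and> x = (\<Sum>g\<in>{g. a g \<noteq> 0}. a g)"
    using ga[THEN conjunct2, THEN conjunct2, THEN conjunct2] .
  hence u: "\<exists>!a. finite {g. a g \<noteq> 0} \<and> (\<forall>g. a g \<in> Ag g) \<and> (0::'a) = (\<Sum>g\<in>{g. a g \<noteq> 0}. a g)"
    by (rule spec)
  have z: "\<forall>g. (0::'a) \<in> Ag g" using ga[THEN conjunct2, THEN conjunct1] by blast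
  have "a = (\<lambda>_. 0)"
  proof -
    from u obtain a0 where a0: "\<forall>y. (finite {g. y g \<noteq> 0} \<and> (\<forall>g. y g \<in> Ag g) \<and> (0::'a) = (\<Sum>g\<in>{g. y g \<noteq> 0}. y g)) \<longrightarrow> y = a0"
      by (elim ex1E) blast
    have h1:  "finite {g. a g \<noteq> 0} \<and> (\<forall>g. a g \<in> Ag g) \<and> (0::'a) = (\<Sum>g\<in>{g. a g \<noteq> 0}. a g)"
      using fin aAg sum0 by simp
    have h2: "finite {g. (\<lambda>_. (0::'a)) g \<noteq> 0} \<and> (\<forall>g. (\<lambda>_. (0::'a)) g \<in> Ag g) \<and> (0::'a) = (\<Sum>g\<in>{g. (\<lambda>_. (0::'a)) g \<noteq> 0}. (\<lambda>_. (0::'a)) g)"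
      using z by simp
    have e1: "a = a0" using spec[OF a0, of a] h1 by (rule mp)
    have e2: "(\<lambda>_. 0) = a0" using spec[OF a0, of "\<lambda>_. 0"] h2 by (rule mp)
    show ?thesis using e1 e2 by simp
  qed
  thus ?thesis unfolding a_def by meson
qed

lemma wg_snoc: "wg (b @ [e]) = - w e + wg b"
  by (induction b) (simp, simp only: append_Cons wg.simps add.assoc)

lemma caseA:
  assumes IH: "\<And>M g. vl M \<Longrightarrow> \<forall>m\<in>set M. deg m = g \<and> len m < n \<Longrightarrow> P (nf M) = 0 \<Longrightarrow> nf M \<approx> LZero"
    and vM: "vl M" and hom: "\<forall>m\<in>set M. deg m = g \<and> len m \<le> n"
    and an: "\<forall>m\<in>set M. alpha m \<noteq> []" and P0: "P (nf M) = 0"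
  shows "nf M \<approx> LZero"
proof (rule split_key[OF vM, of "\<lambda>m. hd (alpha m)"], rule allI)
  fix e
  define Me where "Me = filter (\<lambda>m. hd (alpha m) = e) M"
  show "nf (filter (\<lambda>m. hd (alpha m) = e) M) \<approx> LZero"
  proof (cases "Me = []")
    case True thus ?thesis unfolding Me_def by (simp add: nf_nil R wfI)
  next
    case False
    then obtain m0 where m0: "m0 \<in> set M" "hd (alpha m0) = e" unfolding Me_def
      by (auto simp: filter_empty_conv)
    have e: "e \<in> Ed"
    proof -
      obtain c u a b where "m0 = (c,u,a,b)" by (cases m0)
      thus ?thesis using m0 an vM by (cases a) auto
    qed
    define Tl where "Tl = concat (map (gmulm e) M)"
    have Tl: "Tl = map tla Me" unfolding Tl_def Me_def using gmul_list[OF an] .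
    note g = gmul_nf[OF e vM, folded Tl_def]
    have PT: "P (nf Tl) = 0"
    proof -
      have "P (nf Tl) = P (LMul (LG e) (nf M))" using P_cong[OF g[THEN conjunct1]] by simp
      also have "\<dots> = P (LG e) * P (nf M)" using e vM by (intro P_mul wfI wf_nf)
      finally show ?thesis using P0 by simp
    qed
    have homT: "\<forall>m\<in>set Tl. deg m = - w e + g \<and> len m < n"
    proof
      fix m' assume "m' \<in> set Tl"
      then obtain m where m: "m \<in> set Me" "m' = tla m" using Tl by auto
      obtain c u a b where mm: "m = (c,u,a,b)" by (cases m)
      have "a \<noteq> []" "hd a = e" using m mm an unfolding Me_def by auto
      then obtain a' where a: "a = e # a'" by (cases a) auto
      have "deg m = g" "len m \<le> n" using m hom unfolding Me_def by auto
      hence "w e + (wp a' + wg b) = g" "length a' + length b < n" using mm a by (auto simp: add.assoc)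
      moreover have "wp a' + wg b = - w e + (w e + (wp a' + wg b))" by (simp add: add.assoc[symmetric])
      ultimately show "deg m' = - w e + g \<and> len m' < n" using m(2) mm a by simp
    qed
    have nT: "nf Tl \<approx> LZero" using IH[OF g[THEN conjunct2] homT PT] .
    have vMe: "vl Me" using vM unfolding Me_def by auto
    have "nf Me = nf (concat (map (emulm e) Tl))" unfolding Tl Me_def using emul_list[OF vM an] by simp
    also have "\<dots> \<approx> LMul (LE e) (nf Tl)" using emul_nf[OF e g[THEN conjunct2], THEN conjunct1, THEN S] by simp
    also have "\<dots> \<approx> LMul (LE e) LZero" using nT e by (intro MulR wfI)
    also have "\<dots> \<approx> LZero" using e by (intro mul_zero_r wfI)
    finally show ?thesis unfolding Me_def .
  qed
qed

lemma caseB: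
  assumes IH: "\<And>M g. vl M \<Longrightarrow> \<forall>m\<in>set M. deg m = g \<and> len m < n \<Longrightarrow> P (nf M) = 0 \<Longrightarrow> nf M \<approx> LZero"
    and vM: "vl M" and hom: "\<forall>m\<in>set M. deg m = g \<and> len m \<le> n"
    and bn: "\<forall>m\<in>set M. beta m \<noteq> []" and P0: "P (nf M) = 0"
  shows "nf M \<approx> LZero"
proof (rule split_key[OF vM, of "\<lambda>m. hd (beta m)"], rule allI)
  fix f
  define Mf where "Mf = filter (\<lambda>m. hd (beta m) = f) M"
  show "nf (filter (\<lambda>m. hd (beta m) = f) M) \<approx> LZero"
  proof (cases "Mf = []")
    case True thus ?thesis unfolding Mf_def by (simp add: nf_nil R wfI)
  next
    case False
    then obtain m0 where m0: "m0 \<in> set M" "hd (beta m0) = f" unfolding Mf_def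
      by (auto simp: filter_empty_conv)
    have f: "f \<in> Ed"
    proof -
      obtain c u a b where "m0 = (c,u,a,b)" by (cases m0)
      thus ?thesis using m0 bn vM by (cases b) auto
    qed
    define Rl where "Rl = concat (map (rmulm f) M)"
    have Rl: "Rl = map tlb Mf" unfolding Rl_def Mf_def using rmul_list[OF bn] .
    note r = rmul_nf[OF f vM bn, folded Rl_def]
    have PR: "P (nf Rl) = 0"
    proof -
      have "P (nf Rl) = P (LMul (nf M) (LE f))" using P_cong[OF r[THEN conjunct1]] by simp
      also have "\<dots> = P (nf M) * P (LE f)" using f vM by (intro P_mul wfI wf_nf)
      finally show ?thesis using P0 by simp
    qed
    have homR: "\<forall>m\<in>set Rl. deg m = g + w f \<and> len m < n"
    proof
      fix m' assume "m' \<in> set Rl"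
      then obtain m where m: "m \<in> set Mf" "m' = tlb m" using Rl by auto
      obtain c u a b where mm: "m = (c,u,a,b)" by (cases m)
      have "b \<noteq> []" "hd b = f" using m mm bn unfolding Mf_def by auto
      then obtain b' where b: "b = f # b'" by (cases b) auto
      have dm: "deg m = g" "len m \<le> n" using m hom unfolding Mf_def by auto
      have "wp a + (wg b' + - w f) = g" using dm(1) mm b by (simp only: deg_simp wg.simps)
      hence "(wp a + wg b') + - w f = g" by (simp only: add.assoc)
      hence "wp a + wg b' = g + w f"
        by (metis add.assoc add.left_neutral add.right_inverse add.left_inverse)
      moreover have "length a + length b' < n" using dm(2) mm b by simp
      ultimately have "wp a + wg b' = g + w f" "length a + length b' < n" by auto
      thus "deg m' = g + w f \<and> len m' < n" using m(2) mm b by simp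
    qed
    have nR: "nf Rl \<approx> LZero" using IH[OF r[THEN conjunct2] homR PR] .
    have vMf: "vl Mf" using vM unfolding Mf_def by auto
    have "nf Mf = nf (map (addb f) Rl)" unfolding Rl Mf_def using addb_list[OF bn] by simp
    also have "\<dots> \<approx> LMul (nf Rl) (LG f)"
    proof -
      have "map (addb f) Rl = Mf" unfolding Rl Mf_def using addb_list[OF bn, of f] by simp
      hence "vl (map (addb f) Rl)" using vMf by simp
      thus ?thesis using addb_nf[OF f r[THEN conjunct2], THEN S] by blast
    qed
    also have "\<dots> \<approx> LMul LZero (LG f)" using nR f by (intro MulL wfI)
    also have "\<dots> \<approx> LZero" using f by (intro mul_zero_l wfI)
    finally show ?thesis unfolding Mf_def .
  qed
qed

end


context lpapi begin

lemma lsum_ee_cons: "lsum_ee (e#es) = LAdd (LMul (LE e) (LG e)) (lsum_ee es)"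
  by (simp add: lsum_ee_def)

lemma wf_lsum_ee: "set es \<subseteq> Ed \<Longrightarrow> wf (lsum_ee es)"
  by (induction es) (auto simp: lsum_ee_def intro: wfI)

lemma lsum_ee_mul: "set es \<subseteq> Ed \<Longrightarrow> wf Y \<Longrightarrow> (\<forall>e\<in>set es. LMul (LE e) (LMul (LG e) Y) \<approx> LZero) \<Longrightarrow>
   LMul (lsum_ee es) Y \<approx> LZero"
proof (induction es)
  case Nil thus ?case by (simp add: lsum_ee_def mul_zero_l)
next
  case (Cons e es)
  have e: "e \<in> Ed" and w: "wf (lsum_ee es)" using Cons.prems by (auto intro: wf_lsum_ee)
  have "LMul (lsum_ee (e#es)) Y \<approx> LAdd (LMul (LMul (LE e) (LG e)) Y) (LMul (lsum_ee es) Y)"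
    unfolding lsum_ee_cons using e w Cons.prems by (intro lcong.distrib_right wfI)
  also have "\<dots> \<approx> LAdd (LMul (LE e) (LMul (LG e) Y)) LZero"
    using e w Cons by (intro AddC massoc wfI) auto
  also have "\<dots> \<approx> LZero" using Cons.prems by (intro T[OF add_zero_r]) (auto intro: wfI R)
  finally show ?case .
qed

lemma neg_le0: "(0::'g) \<le> x \<Longrightarrow> - x \<le> 0"
proof -
  assume "0 \<le> x"
  hence "- x + 0 \<le> - x + x" by (rule addl_mono)
  thus ?thesis by simp
qed

lemma caseU:
  assumes IH: "\<And>M g. vl M \<Longrightarrow> \<forall>m\<in>set M. deg m = g \<and> len m < n \<Longrightarrow> P (nf M) = 0 \<Longrightarrow> nf M \<approx> LZero"
    and vM: "vl M" and hom: "\<forall>m\<in>set M. deg m = g \<and> len m \<le> n" and P0: "P (nf M) = 0"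
    and u: "u \<in> V" and sa: "\<forall>m\<in>set M. start sr (alpha m) (vert m) = u"
  shows "nf M \<approx> LZero"
proof -
  have vparts: "\<And>m. m \<in> set M \<Longrightarrow> vert m \<in> V \<and> ispath (alpha m) (vert m) \<and> ispath (beta m) (vert m)"
  proof -
    fix m assume "m \<in> set M"
    moreover obtain c v a b where "m = (c,v,a,b)" by (cases m)
    ultimately show "vert m \<in> V \<and> ispath (alpha m) (vert m) \<and> ispath (beta m) (vert m)" using vM by auto
  qed
  have degm: "\<And>m. m \<in> set M \<Longrightarrow> wp (alpha m) + wg (beta m) = g"
    using hom by (simp add: deg_def)
  consider (A) "\<forall>m\<in>set M. alpha m \<noteq> []" | (B) "\<forall>m\<in>set M. beta m \<noteq> []"
    | (C) m1 m2 where "m1 \<in> set M" "alpha m1 = []" "m2 \<in> set M" "beta m2 = []" by blast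
  thus ?thesis
  proof cases
    case A show ?thesis by (rule caseA[where n=n and M=M and g=g]) (fact IH vM hom A P0)+
  next
    case B show ?thesis by (rule caseB[where n=n and M=M and g=g]) (fact IH vM hom B P0)+
  next
    case C
    have "g = - wp (beta m1)" using degm[OF C(1)] C(2) wg_eq by simp
    moreover have "0 \<le> wp (beta m1)" using vparts[OF C(1)] wp_nonneg by blast
    ultimately have g1: "g \<le> 0" using neg_le0 by simp
    have "g = wp (alpha m2)" using degm[OF C(3)] C(4) by simp
    moreover have "0 \<le> wp (alpha m2)" using vparts[OF C(3)] wp_nonneg by blast
    ultimately have g2: "0 \<le> g" by simp
    have g0: "g = 0" using g1 g2 by simp
    have ab: "\<forall>m\<in>set M. alpha m = [] \<longrightarrow> beta m = []"
    proof (intro ballI impI)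
      fix m assume m: "m \<in> set M" "alpha m = []"
      hence "- wp (beta m) = 0" using degm[OF m(1)] g0 wg_eq by simp
      hence "wp (beta m) = 0" by simp
      thus "beta m = []" using wp_pos vparts[OF m(1)] by fastforce
    qed
    have nt: "\<forall>m\<in>set M. alpha m \<noteq> [] \<longrightarrow> beta m \<noteq> []"
    proof (intro ballI impI)
      fix m assume m: "m \<in> set M" "alpha m \<noteq> []"
      show "beta m \<noteq> []"
      proof
        assume "beta m = []"
        hence "wp (alpha m) = 0" using degm[OF m(1)] g0 by simp
        thus False using wp_pos vparts[OF m(1)] m(2) by fastforce
      qed
    qed
    have vt: "\<forall>m\<in>set M. alpha m = [] \<longrightarrow> m = (coef m, u, [], [])"
    proof (intro ballI impI)
      fix m assume m: "m \<in> set M" "alpha m = []"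
      obtain c v a b where mm: "m = (c,v,a,b)" by (cases m)
      show "m = (coef m, u, [], [])" using m mm sa ab by auto
    qed
    define Vt where "Vt = filter (\<lambda>m. alpha m = []) M"
    define Nt where "Nt = filter (\<lambda>m. alpha m \<noteq> []) M"
    have vVt: "vl Vt" "vl Nt" using vM unfolding Vt_def Nt_def by auto
    have vtV: "\<forall>m\<in>set Vt. m = (coef m, u, [], [])" using vt unfolding Vt_def by auto
    show ?thesis
    proof (cases "Nt = []")
      case True
      hence "Vt = M" unfolding Vt_def Nt_def by (auto simp: filter_empty_conv intro: filter_True)
      hence nv: "nf M \<approx> LSmul (sum_list (map coef M)) (LV u)" using nf_vertex[OF u] vtV by simp
      hence "P (LSmul (sum_list (map coef M)) (LV u)) = 0" using P_cong P0 by metis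
      hence "sum_list (map coef M) = 0" using nonzero u by blast
      hence "nf M \<approx> LSmul 0 (LV u)" using nv by simp
      also have "\<dots> \<approx> LZero" using u by (intro lcong.smul_zero wfI)
      finally show ?thesis .
    next
      case False
      then obtain m3 where m3: "m3 \<in> set M" "alpha m3 \<noteq> []" unfolding Nt_def by (auto simp: filter_empty_conv)
      then obtain e3 a3 where a3: "alpha m3 = e3 # a3" by (cases "alpha m3") auto
      have b3: "beta m3 \<noteq> []" using nt m3 by auto
      have n2: "2 \<le> n" using hom m3 b3 a3 by (cases "beta m3") (auto simp: len_def)
      have e3: "e3 \<in> Ed" "sr e3 = u" using vparts[OF m3(1)] a3 sa m3(1) by auto
      have hT: "\<And>e. e \<in> Ed \<Longrightarrow> \<forall>m'\<in>set (concat (map (gmulm e) M)). deg m' = - w e + g \<and> len m' < n"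
      proof
        fix e m' assume e: "e \<in> Ed" and "m' \<in> set (concat (map (gmulm e) M))"
        then obtain m where m: "m \<in> set M" "m' \<in> set (gmulm e m)" by auto
        obtain c v a b where mm: "m = (c,v,a,b)" by (cases m)
        show "deg m' = - w e + g \<and> len m' < n"
        proof (cases a)
          case Nil
          hence "b = []" using ab m mm by auto
          thus ?thesis using m mm Nil n2 g0 by (auto split: if_splits)
        next
          case (Cons e' a')
          have dm: "w e' + (wp a' + wg b) = g" "length a' + length b < n"
            using hom m mm Cons by (auto simp: add.assoc)
          have "wp a' + wg b = - w e' + (w e' + (wp a' + wg b))" by (simp add: add.assoc[symmetric])
          thus ?thesis using dm m mm Cons by (auto split: if_splits)
        qed
      qed
      have nT: "\<And>e. e \<in> Ed \<Longrightarrow> nf (concat (map (gmulm e) M)) \<approx> LZero"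
      proof -
        fix e assume e: "e \<in> Ed"
        note gg = gmul_nf[OF e vM]
        have "P (nf (concat (map (gmulm e) M))) = P (LMul (LG e) (nf M))" using P_cong[OF gg[THEN conjunct1]] by simp
        also have "\<dots> = P (LG e) * P (nf M)" using e vM by (intro P_mul wfI wf_nf)
        finally have "P (nf (concat (map (gmulm e) M))) = 0" using P0 by simp
        thus "nf (concat (map (gmulm e) M)) \<approx> LZero" using IH[OF gg[THEN conjunct2] hT[OF e]] by blast
      qed
      have wM: "wf (nf M)" using vM by (rule wf_nf)
      show ?thesis
      proof (cases "regular_vertex Ed sr u")
        case True
        then obtain es where es: "distinct es" "set es = {e \<in> Ed. sr e = u}"
          unfolding regular_vertex_def using finite_distinct_list by blast
        have "filter (\<lambda>m. start sr (alpha m) (vert m) = u) M = M" using sa by (intro filter_True) blast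
        hence "LMul (LV u) (nf M) \<approx> nf M" using vmul_nf[OF u vM] vmul_list by simp
        hence "nf M \<approx> LMul (LV u) (nf M)" by (rule S)
        also have "\<dots> \<approx> LMul (lsum_ee es) (nf M)" using lcong.ck2[OF u True es] wM by (intro MulL)
        also have "\<dots> \<approx> LZero"
        proof (intro lsum_ee_mul wM ballI)
          show "set es \<subseteq> Ed" using es by auto
          fix e assume "e \<in> set es"
          hence e: "e \<in> Ed" using es by auto
          have "LMul (LE e) (LMul (LG e) (nf M)) \<approx> LMul (LE e) (nf (concat (map (gmulm e) M)))"
            using gmul_nf[OF e vM] e by (intro MulR wfI) auto
          also have "\<dots> \<approx> LMul (LE e) LZero" using nT[OF e] e by (intro MulR wfI)
          also have "\<dots> \<approx> LZero" using e by (intro mul_zero_r wfI)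
          finally show "LMul (LE e) (LMul (LG e) (nf M)) \<approx> LZero" .
        qed
        finally show ?thesis .
      next
        case False
        define Eu where "Eu = {e \<in> Ed. sr e = u}"
        have "Eu \<noteq> {}" using e3 unfolding Eu_def by auto
        hence infE: "infinite Eu" using False unfolding regular_vertex_def Eu_def by auto
        define F where "F = (\<lambda>m. hd (alpha m)) ` set Nt"
        have "finite F" unfolding F_def by simp
        hence "infinite (Eu - F)" using infE by (simp add: Diff_infinite_finite)
        then obtain e where eE: "e \<in> Eu" "e \<notin> F" using infinite_imp_nonempty by blast
        hence e: "e \<in> Ed" "sr e = u" unfolding Eu_def by auto
        have re: "rg e \<in> V" using e graph by auto
        have nh: "\<forall>m\<in>set M. alpha m \<noteq> [] \<longrightarrow> hd (alpha m) \<noteq> e" using eE unfolding F_def Nt_def by auto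
        have Teq: "concat (map (gmulm e) M) = map (\<lambda>m. (coef m, rg e, [], [e])) Vt"
          unfolding Vt_def using gmul_list_inf[OF sa e(2) ab nh] .
        define Tt where "Tt = map (\<lambda>m. (coef m, rg e, []::'e list, [e])) Vt"
        have vT: "vl Tt" using gmul_nf[OF e(1) vM] Teq unfolding Tt_def by simp
        have nT0: "nf Tt \<approx> LZero" using nT[OF e(1)] Teq unfolding Tt_def by simp
        have bT: "\<forall>m\<in>set Tt. beta m \<noteq> []" unfolding Tt_def by auto
        note rr = rmul_nf[OF e(1) vT bT]
        have "concat (map (rmulm e) Tt) = map (\<lambda>m. (coef m, rg e, []::'e list, []::'e list)) Vt" unfolding Tt_def by (rule rmul_list_inf)
        hence "LMul (nf Tt) (LE e) \<approx> nf (map (\<lambda>m. (coef m, rg e, []::'e list, []::'e list)) Vt)" using rr by simp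
        also have "\<dots> \<approx> LSmul (sum_list (map coef (map (\<lambda>m. (coef m, rg e, []::'e list, []::'e list)) Vt))) (LV (rg e))"
          by (rule nf_vertex[OF re]) auto
        finally have h1: "LMul (nf Tt) (LE e) \<approx> LSmul (sum_list (map coef Vt)) (LV (rg e))" by (simp add: comp_def)
        have "LMul (nf Tt) (LE e) \<approx> LMul LZero (LE e)" using nT0 e by (intro MulL wfI)
        also have "\<dots> \<approx> LZero" using e by (intro mul_zero_l wfI)
        finally have "P (LMul (nf Tt) (LE e)) = 0" by (rule P_zero')
        hence "P (LSmul (sum_list (map coef Vt)) (LV (rg e))) = 0" using P_cong[OF h1] by simp
        hence s0: "sum_list (map coef Vt) = 0" using nonzero re by blast
        have "nf Vt \<approx> LSmul (sum_list (map coef Vt)) (LV u)" using nf_vertex[OF u vtV] .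
        also have "\<dots> \<approx> LZero" using s0 u by (simp, intro lcong.smul_zero wfI)
        finally have nV: "nf Vt \<approx> LZero" .
        have "mset (Vt @ Nt) = mset M" unfolding Vt_def Nt_def by (simp add: multiset_partition[symmetric])
        hence "nf M \<approx> nf (Vt @ Nt)" using vM by (intro nf_perm) auto
        also have "\<dots> \<approx> LAdd (nf Vt) (nf Nt)" using vVt by (intro nf_append)
        finally have nM: "nf M \<approx> LAdd (nf Vt) (nf Nt)" .
        have "P (nf M) = P (LAdd (nf Vt) (nf Nt))" by (rule P_cong[OF nM])
        also have "\<dots> = P (nf Vt) + P (nf Nt)" using vVt by (intro P_add wf_nf)
        finally have "P (nf M) = P (nf Vt) + P (nf Nt)" .
        hence PN: "P (nf Nt) = 0" using P0 P_zero'[OF nV] by simp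
        have hN: "\<forall>m\<in>set Nt. deg m = g \<and> len m \<le> n" using hom unfolding Nt_def by simp
        have aN: "\<forall>m\<in>set Nt. alpha m \<noteq> []" unfolding Nt_def by simp
        have nN: "nf Nt \<approx> LZero"
          by (rule caseA[where n=n and M=Nt and g=g]) (fact IH, fact vVt(2), fact hN, fact aN, fact PN)
        have "nf M \<approx> LAdd LZero LZero" using T[OF nM AddC[OF nV nN]] .
        thus ?thesis using T[OF _ zero_zero] by blast
      qed
    qed
  qed
qed

lemma main_ind: "vl M \<Longrightarrow> \<forall>m\<in>set M. deg m = g \<and> len m \<le> n \<Longrightarrow> P (nf M) = 0 \<Longrightarrow> nf M \<approx> LZero"
proof (induction n arbitrary: M g rule: less_induct)
  case (less n)
  have IH: "\<And>M g. vl M \<Longrightarrow> \<forall>m\<in>set M. deg m = g \<and> len m < n \<Longrightarrow> P (nf M) = 0 \<Longrightarrow> nf M \<approx> LZero"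
  proof -
    fix M' g' assume a: "vl M'" "\<forall>m\<in>set M'. deg m = g' \<and> len m < n" "P (nf M') = 0"
    show "nf M' \<approx> LZero"
    proof (cases "M' = []")
      case True thus ?thesis by (simp add: nf_nil R wfI)
    next
      case False
      then obtain m where "m \<in> set M'" by (cases M') auto
      hence n0: "n - 1 < n" using a(2) by fastforce
      have "\<forall>m\<in>set M'. deg m = g' \<and> len m \<le> n - 1" using a(2) by fastforce
      thus ?thesis using less.IH[OF n0 a(1) _ a(3)] by blast
    qed
  qed
  show ?case
  proof (rule split_key[OF less.prems(1), of "\<lambda>m. start sr (alpha m) (vert m)"], rule allI)
    fix u
    define Mu where "Mu = filter (\<lambda>m. start sr (alpha m) (vert m) = u) M"
    show "nf (filter (\<lambda>m. start sr (alpha m) (vert m) = u) M) \<approx> LZero"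
    proof (cases "Mu = []")
      case True thus ?thesis unfolding Mu_def by (simp add: nf_nil R wfI)
    next
      case False
      then obtain m where m: "m \<in> set M" "start sr (alpha m) (vert m) = u" unfolding Mu_def
        by (auto simp: filter_empty_conv)
      have u: "u \<in> V"
      proof -
        obtain c v a b where "m = (c,v,a,b)" by (cases m)
        thus ?thesis using m less.prems(1) start_V[of v a] by auto
      qed
      have vMu: "vl Mu" using less.prems(1) unfolding Mu_def by auto
      have "LMul (LV u) (nf M) \<approx> nf Mu" using vmul_nf[OF u less.prems(1)] vmul_list unfolding Mu_def by simp
      hence "P (nf Mu) = P (LMul (LV u) (nf M))" using P_cong S by metis
      also have "\<dots> = P (LV u) * P (nf M)" using u less.prems(1) by (intro P_mul wfI wf_nf)
      finally have PMu: "P (nf Mu) = 0" using less.prems(3) by simp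
      have hMu: "\<forall>m\<in>set Mu. deg m = g \<and> len m \<le> n" using less.prems(2) unfolding Mu_def by simp
      have sMu: "\<forall>m\<in>set Mu. start sr (alpha m) (vert m) = u" unfolding Mu_def by simp
      have "nf Mu \<approx> LZero"
        by (rule caseU[where n=n and M=Mu and g=g and u=u]) (fact IH, fact vMu, fact hMu, fact PMu, fact u, fact sMu)
      thus ?thesis unfolding Mu_def .
    qed
  qed
qed

theorem pi_inj: "inj_on \<pi> (LPA V Ed sr rg)"
proof (rule inj_onI)
  fix X Y assume X: "X \<in> LPA V Ed sr rg" and Y: "Y \<in> LPA V Ed sr rg" and eq: "\<pi> X = \<pi> Y"
  obtain s where s: "wf s" "X = lcls V Ed sr rg s" using X unfolding LPA_def by auto
  obtain t where t: "wf t" "Y = lcls V Ed sr rg t" using Y unfolding LPA_def by auto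
  define d where "d = LAdd s (LSmul (-1) t)"
  have wd: "wf d" unfolding d_def using s t by (intro wfI)
  have "P d = P s + sm (-1) (P t)" unfolding d_def using s t by (simp add: P_add P_smul wfI)
  also have "\<dots> = 0" using eq s t by (simp add: sm_neg)
  finally have Pd: "P d = 0" .
  obtain M where M: "vl M" "d \<approx> nf M" using nf_exists[OF wd] by blast
  have PM: "P (nf M) = 0" using Pd P_cong[OF M(2)] by simp
  have "nf M \<approx> LZero"
  proof (rule split_key[OF M(1), of deg], rule allI)
    fix g
    have v: "vl (filter (\<lambda>m. deg m = g) M)" using M(1) by auto
    have Lb: "\<And>m. m \<in> set M \<Longrightarrow> len m \<le> sum_list (map len M)" by (rule member_le_sum_list) auto
    have "\<forall>m\<in>set (filter (\<lambda>m. deg m = g) M). deg m = g \<and> len m \<le> sum_list (map len M)"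
      using Lb by (simp only: set_filter) blast
    thus "nf (filter (\<lambda>m. deg m = g) M) \<approx> LZero"
      using main_ind[OF v _ homog_parts[OF M(1) PM]] by blast
  qed
  hence d0: "d \<approx> LZero" using M(2) T by blast
  have "s \<approx> LAdd s LZero" using s by (intro S[OF add_zero_r])
  also have "\<dots> \<approx> LAdd s (LAdd (LSmul (-1) t) t)" using s t by (intro AddR S[OF add_neg])
  also have "\<dots> \<approx> LAdd d t" unfolding d_def using s t by (intro S[OF add_assoc'] wfI)
  also have "\<dots> \<approx> LAdd LZero t" using d0 t by (intro AddL)
  also have "\<dots> \<approx> t" using t by (intro add_zero_l)
  finally have "s \<approx> t" .
  thus "X = Y" using s t lcls_eq by simp
qed

end

theorem mainTheorem14:
  fixes V :: "'v set" and Ed :: "'e set" and sr rg :: "'e \<Rightarrow> 'v"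
    and w :: "'e \<Rightarrow> 'g::{group_add, linorder}"
    and sm :: "'r::comm_ring_1 \<Rightarrow> 'a::ring \<Rightarrow> 'a"
    and Ag :: "'g \<Rightarrow> 'a set"
    and \<pi> :: "('r,'v,'e) lterm set \<Rightarrow> 'a"
  assumes graph: "\<forall>e\<in>Ed. sr e \<in> V \<and> rg e \<in> V"
    and ordG: "ordered_group TYPE('g)"
    and wpos: "\<forall>e\<in>Ed. 0 < w e"
    and Agr: "graded_algebra sm Ag"
    and hom_add: "\<forall>x\<in>lterms V Ed. \<forall>y\<in>lterms V Ed.
        \<pi> (lcls V Ed sr rg (LAdd x y)) = \<pi> (lcls V Ed sr rg x) + \<pi> (lcls V Ed sr rg y)"
    and hom_mul: "\<forall>x\<in>lterms V Ed. \<forall>y\<in>lterms V Ed.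
        \<pi> (lcls V Ed sr rg (LMul x y)) = \<pi> (lcls V Ed sr rg x) * \<pi> (lcls V Ed sr rg y)"
    and hom_smul: "\<forall>c. \<forall>x\<in>lterms V Ed.
        \<pi> (lcls V Ed sr rg (LSmul c x)) = sm c (\<pi> (lcls V Ed sr rg x))"
    and hom_graded: "\<forall>g. \<forall>X\<in>LPA_comp V Ed sr rg w g. \<pi> X \<in> Ag g"
    and nonzero: "\<forall>v\<in>V. \<forall>c::'r. c \<noteq> 0 \<longrightarrow> \<pi> (lcls V Ed sr rg (LSmul c (LV v))) \<noteq> 0"
  shows "inj_on \<pi> (LPA V Ed sr rg)"
proof -
  interpret lpapi V Ed sr rg "TYPE('r)" w sm Ag \<pi>
    by unfold_locales (fact assms)+
  show ?thesis by (rule pi_inj)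
qed

end
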